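(* The Hilbert series of the coordinate ring of the cone of ${\mathrm{O}}(3)$ is \[\mathrm{H}(\mathcal{O}(\mathcal{C}({\mathrm{O}}(3)));t)=-t+\sum_{d=0}^\infty\binom{2d+3}{3}t^{d}=\frac{1+5t+5t^2-6t^3+4t^4-t^5}{(1-t)^4}.\]
   Context: ${\mathrm{O}}(3)=\{M\in\mathbb{C}^{3\times3}\mid M^TM=I\}$. The cone $\mathcal{C}({\mathrm{O}}(3))$ is the Zariski closure in $\mathbb{C}^{3\times 3}$ of $\{cM\mid c\in\mathbb{C},M\in{\mathrm{O}}(3)\}$; its coordinate ring is the quotient of the standard graded polynomial ring $\mathbb{C}[x_{ij}\mid 1\le i,j\le 3]$ by the homogeneous vanishing ideal of the cone, with the induced grading. The Hilbert series of a graded algebra $A=\bigoplus_dA_d$ is $\sum_d\dim_{\mathbb{C}}(A_d)t^d$. *)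

theory Defs
  imports "HOL-Analysis.Analysis" "HOL-Computational_Algebra.Formal_Power_Series" "HOL-Library.Function_Algebras"
begin

type_synonym mat3 = "complex^3^3"
type_synonym expo = "3 \<Rightarrow> 3 \<Rightarrow> nat"

definition O3 :: "mat3 set" where
  "O3 = {M. transpose M ** M = mat 1}"

text \<open>Monomials in the variables x_ij, and polynomials as finitely supported
 coefficient functions on exponent vectors.\<close>

definition monomial_eval :: "expo \<Rightarrow> mat3 \<Rightarrow> complex" where
  "monomial_eval a M = (\<Prod>i\<in>UNIV. \<Prod>j\<in>UNIV. (M$i$j) ^ (a i j))"

definition total_degree :: "expo \<Rightarrow> nat" where
  "total_degree a = (\<Sum>i\<in>UNIV. \<Sum>j\<in>UNIV. a i j)"

definition polys :: "(expo \<Rightarrow> complex) set" where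
  "polys = {p. finite {a. p a \<noteq> 0}}"

definition homog_polys :: "nat \<Rightarrow> (expo \<Rightarrow> complex) set" where
  "homog_polys d = {p \<in> polys. \<forall>a. p a \<noteq> 0 \<longrightarrow> total_degree a = d}"

definition poly_eval :: "(expo \<Rightarrow> complex) \<Rightarrow> mat3 \<Rightarrow> complex" where
  "poly_eval p M = (\<Sum>a\<in>{a. p a \<noteq> 0}. p a * monomial_eval a M)"

definition zariski_closure :: "mat3 set \<Rightarrow> mat3 set" where
  "zariski_closure S = {M. \<forall>p\<in>polys. (\<forall>x\<in>S. poly_eval p x = 0) \<longrightarrow> poly_eval p M = 0}"

definition cone_O3 :: "mat3 set" where
  "cone_O3 = zariski_closure {(\<chi> i j. c * M$i$j) | c M. M \<in> O3}"

text \<open>Degree-d part of the coordinate ring C[x]/I(cone): homogeneous degree-d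
 polynomials modulo those vanishing on the cone, realised (isomorphically) as the
 space of their restrictions (as functions) to the cone.\<close>

definition coord_ring_part :: "nat \<Rightarrow> (mat3 \<Rightarrow> complex) set" where
  "coord_ring_part d = (\<lambda>p. \<lambda>M. if M \<in> cone_O3 then poly_eval p M else 0) ` homog_polys d"

definition hilbert_function :: "nat \<Rightarrow> nat" where
  "hilbert_function d = vector_space.dim (\<lambda>(c::complex) (f::mat3 \<Rightarrow> complex). \<lambda>x. c * f x)
                          (coord_ring_part d)"

definition hilbert_series :: "rat fps" where
  "hilbert_series = Abs_fps (\<lambda>d. of_nat (hilbert_function d))"

end

theory Submission
  imports Defs
begin

type_synonym q4 = "complex \<times> complex \<times> complex \<times> complex"

definition Rent :: "q4 \<Rightarrow> 3 \<Rightarrow> 3 \<Rightarrow> complex" where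
"Rent q i j = (case q of (a,b,c,d) \<Rightarrow>
  if i = 1 then (if j = 1 then a*a+b*b-c*c-d*d else if j = 2 then 2*(b*c-a*d) else 2*(b*d+a*c))
  else if i = 2 then (if j = 1 then 2*(b*c+a*d) else if j = 2 then a*a-b*b+c*c-d*d else 2*(c*d-a*b))
  else (if j = 1 then 2*(b*d-a*c) else if j = 2 then 2*(c*d+a*b) else a*a-b*b-c*c+d*d))"

definition Rm :: "q4 \<Rightarrow> mat3" where "Rm q = (\<chi> i j. Rent q i j)"

definition Nq :: "q4 \<Rightarrow> complex" where "Nq q = (case q of (a,b,c,d) \<Rightarrow> a*a+b*b+c*c+d*d)"

lemma Rm_nth[simp]: "Rm q $ i $ j = Rent q i j" by (simp add: Rm_def)

lemma Rent_simps[simp]: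
  "Rent (a,b,c,d) 1 1 = a*a+b*b-c*c-d*d" "Rent (a,b,c,d) 1 2 = 2*(b*c-a*d)" "Rent (a,b,c,d) 1 3 = 2*(b*d+a*c)"
  "Rent (a,b,c,d) 2 1 = 2*(b*c+a*d)" "Rent (a,b,c,d) 2 2 = a*a-b*b+c*c-d*d" "Rent (a,b,c,d) 2 3 = 2*(c*d-a*b)"
  "Rent (a,b,c,d) 3 1 = 2*(b*d-a*c)" "Rent (a,b,c,d) 3 2 = 2*(c*d+a*b)" "Rent (a,b,c,d) 3 3 = a*a-b*b-c*c+d*d"
  by (simp_all add: Rent_def)

lemma RtR0: "\<forall>i j. (\<Sum>k\<in>UNIV. Rent (a,b,c,d) k i * Rent (a,b,c,d) k j) = (if i = j then (Nq (a,b,c,d))^2 else 0)"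
  unfolding Nq_def sum_3 forall_3
  apply (simp add: power2_eq_square)
  apply (intro conjI; algebra)
  done

lemma RtR: "(\<Sum>k\<in>UNIV. Rent q k i * Rent q k j) = (if i = j then (Nq q)^2 else 0)"
  using RtR0 by (cases q) auto

definition S0 :: "mat3 set" where "S0 = {(\<chi> i j. c * M$i$j) | c M. M \<in> O3}"

lemma cone_O3_S0: "cone_O3 = zariski_closure S0"
  unfolding cone_O3_def S0_def ..

lemma R_in_S0:
  assumes "Nq q \<noteq> 0" shows "Rm q \<in> S0"
proof -
  define M :: mat3 where "M = (\<chi> i j. Rent q i j / Nq q)"
  have "transpose M ** M = mat 1"
  proof -
    { fix i j :: 3
      have "(transpose M ** M) $ i $ j = (\<Sum>k\<in>UNIV. Rent q k i * Rent q k j) / (Nq q)^2"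
        by (simp add: matrix_matrix_mult_def transpose_def M_def sum_divide_distrib power2_eq_square)
      also have "... = mat 1 $ i $ j" using assms by (simp add: RtR mat_def)
      finally have "(transpose M ** M) $ i $ j = mat 1 $ i $ j" . }
    then show ?thesis by (simp add: vec_eq_iff)
  qed
  moreover have "Rm q = (\<chi> i j. Nq q * M$i$j)"
    using assms by (simp add: vec_eq_iff M_def)
  ultimately show ?thesis unfolding S0_def O3_def by blast
qed

lemma cont_zero:
  fixes g :: "complex \<Rightarrow> complex"
  assumes "continuous (at 0) g" "eventually (\<lambda>t. g t = 0) (at 0)"
  shows "g 0 = 0"
proof -
  have "(g \<longlongrightarrow> g 0) (at 0)" using assms(1) continuous_at by blast
  moreover have "(g \<longlongrightarrow> 0) (at 0)" using assms(2) by (rule tendsto_eventually)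
  ultimately show ?thesis using tendsto_unique[OF at_neq_bot] by blast
qed

lemma poly_eval_expand:
  "poly_eval p M = (\<Sum>a\<in>{a. p a \<noteq> 0}. p a * (\<Prod>i\<in>UNIV. \<Prod>j\<in>UNIV. (M$i$j) ^ (a i j)))"
  by (simp add: poly_eval_def monomial_eval_def)

lemma cont_Rent: "continuous (at t) (\<lambda>t. Rent (a+t,b,c,d) i j)"
  using exhaust_3[of i] exhaust_3[of j]
  by (elim disjE) (simp_all add: continuous_intros)

lemma R_in_cone: "Rm q \<in> cone_O3"
  unfolding cone_O3_S0 zariski_closure_def
proof (intro CollectI ballI impI)
  fix p assume p: "p \<in> polys" and van: "\<forall>x\<in>S0. poly_eval p x = 0"
  obtain a b c d where q: "q = (a,b,c,d)" by (cases q) auto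
  show "poly_eval p (Rm q) = 0"
  proof (cases "Nq q = 0")
    case False then show ?thesis using van R_in_S0 by blast
  next
    case True
    define g where "g t = poly_eval p (Rm (a+t,b,c,d))" for t
    have "continuous (at 0) g"
      unfolding g_def poly_eval_expand Rm_nth
      by (intro continuous_intros cont_Rent)
    moreover have "eventually (\<lambda>t. g t = 0) (at 0)"
    proof -
      define e where "e = (if a = 0 then 1 else norm (2*a))"
      have "e > 0" by (simp add: e_def)
      moreover have "\<forall>t. t \<noteq> 0 \<and> dist t 0 < e \<longrightarrow> g t = 0"
      proof (intro allI impI)
        fix t :: complex assume t: "t \<noteq> 0 \<and> dist t 0 < e"
        have "t \<noteq> -2*a"
        proof
          assume "t = -2*a"
          then have "a \<noteq> 0" using t by auto
          then show False using t \<open>t = -2*a\<close> by (simp add: e_def norm_minus_commute)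
        qed
        then have "2*a + t \<noteq> 0" by (metis add.commute add_eq_0_iff2 mult_minus_left)
        have "Nq (a+t,b,c,d) = Nq q + t*(2*a+t)" unfolding q Nq_def by (simp add: algebra_simps)
        also have "... \<noteq> 0" using True t \<open>2*a+t \<noteq> 0\<close> by simp
        finally show "g t = 0" unfolding g_def using van R_in_S0 by blast
      qed
      ultimately show ?thesis unfolding eventually_at by auto
    qed
    ultimately have "g 0 = 0" by (rule cont_zero)
    then show ?thesis by (simp add: g_def q)
  qed
qed

lemma so3_ids:
  fixes m11 m12 m13 m21 m22 m23 m31 m32 m33 :: complex
  assumes g0: "m11*m11+m21*m21+m31*m31 - 1 = 0"
    and g1: "m11*m12+m21*m22+m31*m32 = 0"
    and g2: "m11*m13+m21*m23+m31*m33 = 0"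
    and g3: "m12*m12+m22*m22+m32*m32 - 1 = 0"
    and g4: "m12*m13+m22*m23+m32*m33 = 0"
    and g5: "m13*m13+m23*m23+m33*m33 - 1 = 0"
    and g6: "m11*m11+m12*m12+m13*m13 - 1 = 0"
    and g7: "m11*m21+m12*m22+m13*m23 = 0"
    and g8: "m11*m31+m12*m32+m13*m33 = 0"
    and g9: "m21*m21+m22*m22+m23*m23 - 1 = 0"
    and g10: "m21*m31+m22*m32+m23*m33 = 0"
    and g11: "m31*m31+m32*m32+m33*m33 - 1 = 0"
    and g12: "m11*m22*m33 + m12*m23*m31 + m13*m21*m32 - m13*m22*m31 - m12*m21*m33 - m11*m23*m32 - 1 = 0"
  shows "(m32-m23)*(m32-m23) = (1+m11+m22+m33)*(1+m11-m22-m33)"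
    and "(m32-m23)*(m13-m31) = (1+m11+m22+m33)*(m12+m21)"
    and "(m32-m23)*(m21-m12) = (1+m11+m22+m33)*(m13+m31)"
    and "(m13-m31)*(m32-m23) = (1+m11+m22+m33)*(m12+m21)"
    and "(m13-m31)*(m13-m31) = (1+m11+m22+m33)*(1-m11+m22-m33)"
    and "(m13-m31)*(m21-m12) = (1+m11+m22+m33)*(m23+m32)"
    and "(m21-m12)*(m32-m23) = (1+m11+m22+m33)*(m13+m31)"
    and "(m21-m12)*(m13-m31) = (1+m11+m22+m33)*(m23+m32)"
    and "(m21-m12)*(m21-m12) = (1+m11+m22+m33)*(1-m11-m22+m33)"
    and "(m32-m23)*(m32-m23) = (1+m11-m22-m33)*(1+m11+m22+m33)"
    and "(m32-m23)*(m12+m21) = (1+m11-m22-m33)*(m13-m31)"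
    and "(m32-m23)*(m13+m31) = (1+m11-m22-m33)*(m21-m12)"
    and "(m12+m21)*(m32-m23) = (1+m11-m22-m33)*(m13-m31)"
    and "(m12+m21)*(m12+m21) = (1+m11-m22-m33)*(1-m11+m22-m33)"
    and "(m12+m21)*(m13+m31) = (1+m11-m22-m33)*(m23+m32)"
    and "(m13+m31)*(m32-m23) = (1+m11-m22-m33)*(m21-m12)"
    and "(m13+m31)*(m12+m21) = (1+m11-m22-m33)*(m23+m32)"
    and "(m13+m31)*(m13+m31) = (1+m11-m22-m33)*(1-m11-m22+m33)"
    and "(m13-m31)*(m13-m31) = (1-m11+m22-m33)*(1+m11+m22+m33)"
    and "(m13-m31)*(m12+m21) = (1-m11+m22-m33)*(m32-m23)"
    and "(m13-m31)*(m23+m32) = (1-m11+m22-m33)*(m21-m12)"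
    and "(m12+m21)*(m13-m31) = (1-m11+m22-m33)*(m32-m23)"
    and "(m12+m21)*(m12+m21) = (1-m11+m22-m33)*(1+m11-m22-m33)"
    and "(m12+m21)*(m23+m32) = (1-m11+m22-m33)*(m13+m31)"
    and "(m23+m32)*(m13-m31) = (1-m11+m22-m33)*(m21-m12)"
    and "(m23+m32)*(m12+m21) = (1-m11+m22-m33)*(m13+m31)"
    and "(m23+m32)*(m23+m32) = (1-m11+m22-m33)*(1-m11-m22+m33)"
    and "(m21-m12)*(m21-m12) = (1-m11-m22+m33)*(1+m11+m22+m33)"
    and "(m21-m12)*(m13+m31) = (1-m11-m22+m33)*(m32-m23)"
    and "(m21-m12)*(m23+m32) = (1-m11-m22+m33)*(m13-m31)"
    and "(m13+m31)*(m21-m12) = (1-m11-m22+m33)*(m32-m23)"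
    and "(m13+m31)*(m13+m31) = (1-m11-m22+m33)*(1+m11-m22-m33)"
    and "(m13+m31)*(m23+m32) = (1-m11-m22+m33)*(m12+m21)"
    and "(m23+m32)*(m21-m12) = (1-m11-m22+m33)*(m13-m31)"
    and "(m23+m32)*(m13+m31) = (1-m11-m22+m33)*(m12+m21)"
    and "(m23+m32)*(m23+m32) = (1-m11-m22+m33)*(1-m11+m22-m33)"
proof -
  note zs = g0 g1 g2 g3 g4 g5 g6 g7 g8 g9 g10 g11 g12
  have "(m32-m23)*(m32-m23) - (1+m11+m22+m33)*(1+m11-m22-m33) = ((-1) + (2)*m23*m32 + (-2)*m22*m33 + (1)*m13^2 + (1)*m12^2)*(m11*m11+m21*m21+m31*m31 - 1) + ((-2)*m23*m31 + (2)*m21*m33 + (-1)*m11*m12)*(m11*m12+m21*m22+m31*m32) + ((2)*m22*m31 + (-2)*m21*m32 + (-1)*m11*m13)*(m11*m13+m21*m23+m31*m33) + ((1))*(m12*m12+m22*m22+m32*m32 - 1) + ((1))*(m13*m13+m23*m23+m33*m33 - 1) + ((-1)*m31^2 + (-1)*m21^2)*(m11*m11+m12*m12+m13*m13 - 1) + ((1)*m11*m21)*(m11*m21+m12*m22+m13*m23) + ((1)*m11*m31)*(m11*m31+m12*m32+m13*m33) + ((2)*m11)*(m11*m22*m33 + m12*m23*m31 + m13*m21*m32 - m13*m22*m31 - m12*m21*m33 - m11*m23*m32 - 1)" by algebra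
  also have "... = 0" by (simp only: zs mult_zero_right add_0_right add_0_left)
  finally show "(m32-m23)*(m32-m23) = (1+m11+m22+m33)*(1+m11-m22-m33)" by simp
  have "(m32-m23)*(m13-m31) - (1+m11+m22+m33)*(m12+m21) = ((-1)*m13*m32 + (1)*m12*m33)*(m11*m11+m21*m21+m31*m31 - 1) + ((-1) + (1)*m23*m32 + (-1)*m22*m33 + (1)*m13*m31 + (-1)*m11*m33)*(m11*m12+m21*m22+m31*m32) + ((-1)*m12*m31 + (1)*m11*m32)*(m11*m13+m21*m23+m31*m33) + ((-1)*m23*m31 + (1)*m21*m33)*(m12*m12+m22*m22+m32*m32 - 1) + ((1)*m22*m31 + (-1)*m21*m32)*(m12*m13+m22*m23+m32*m33) + ((-1))*(m11*m21+m12*m22+m13*m23) + ((1)*m21 + (1)*m12)*(m11*m22*m33 + m12*m23*m31 + m13*m21*m32 - m13*m22*m31 - m12*m21*m33 - m11*m23*m32 - 1)" by algebra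
  also have "... = 0" by (simp only: zs mult_zero_right add_0_right add_0_left)
  finally show "(m32-m23)*(m13-m31) = (1+m11+m22+m33)*(m12+m21)" by simp
  have "(m32-m23)*(m21-m12) - (1+m11+m22+m33)*(m13+m31) = ((1)*m13*m22 + (-1)*m12*m23)*(m11*m11+m21*m21+m31*m31 - 1) + ((-1)*m13*m21 + (1)*m11*m23)*(m11*m12+m21*m22+m31*m32) + ((-1) + (1)*m23*m32 + (-1)*m22*m33 + (1)*m12*m21 + (-1)*m11*m22)*(m11*m13+m21*m23+m31*m33) + ((-1)*m23*m31 + (1)*m21*m33)*(m12*m13+m22*m23+m32*m33) + ((1)*m22*m31 + (-1)*m21*m32)*(m13*m13+m23*m23+m33*m33 - 1) + ((-1))*(m11*m31+m12*m32+m13*m33) + ((1)*m31 + (1)*m13)*(m11*m22*m33 + m12*m23*m31 + m13*m21*m32 - m13*m22*m31 - m12*m21*m33 - m11*m23*m32 - 1)" by algebra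
  also have "... = 0" by (simp only: zs mult_zero_right add_0_right add_0_left)
  finally show "(m32-m23)*(m21-m12) = (1+m11+m22+m33)*(m13+m31)" by simp
  have "(m13-m31)*(m32-m23) - (1+m11+m22+m33)*(m12+m21) = ((-1)*m13*m32 + (1)*m12*m33)*(m11*m11+m21*m21+m31*m31 - 1) + ((-1) + (1)*m23*m32 + (-1)*m22*m33 + (1)*m13*m31 + (-1)*m11*m33)*(m11*m12+m21*m22+m31*m32) + ((-1)*m12*m31 + (1)*m11*m32)*(m11*m13+m21*m23+m31*m33) + ((-1)*m23*m31 + (1)*m21*m33)*(m12*m12+m22*m22+m32*m32 - 1) + ((1)*m22*m31 + (-1)*m21*m32)*(m12*m13+m22*m23+m32*m33) + ((-1))*(m11*m21+m12*m22+m13*m23) + ((1)*m21 + (1)*m12)*(m11*m22*m33 + m12*m23*m31 + m13*m21*m32 - m13*m22*m31 - m12*m21*m33 - m11*m23*m32 - 1)" by algebra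
  also have "... = 0" by (simp only: zs mult_zero_right add_0_right add_0_left)
  finally show "(m13-m31)*(m32-m23) = (1+m11+m22+m33)*(m12+m21)" by simp
  have "(m13-m31)*(m13-m31) - (1+m11+m22+m33)*(1-m11+m22-m33) = ((1))*(m11*m11+m21*m21+m31*m31 - 1) + ((-2)*m13*m32 + (2)*m12*m33)*(m11*m12+m21*m22+m31*m32) + ((2)*m13*m31 + (-2)*m11*m33)*(m12*m12+m22*m22+m32*m32 - 1) + ((-2)*m12*m31 + (2)*m11*m32)*(m12*m13+m22*m23+m32*m33) + ((1))*(m13*m13+m23*m23+m33*m33 - 1) + ((-1))*(m21*m21+m22*m22+m23*m23 - 1) + ((2)*m22)*(m11*m22*m33 + m12*m23*m31 + m13*m21*m32 - m13*m22*m31 - m12*m21*m33 - m11*m23*m32 - 1)" by algebra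
  also have "... = 0" by (simp only: zs mult_zero_right add_0_right add_0_left)
  finally show "(m13-m31)*(m13-m31) = (1+m11+m22+m33)*(1-m11+m22-m33)" by simp
  have "(m13-m31)*(m21-m12) - (1+m11+m22+m33)*(m23+m32) = ((1)*m12*m31)*(m11*m11+m21*m21+m31*m31 - 1) + ((1)*m13*m22 + (-1)*m12*m23 + (-1)*m11*m31)*(m11*m12+m21*m22+m31*m32) + ((-1)*m13*m32 + (1)*m12*m33)*(m11*m13+m21*m23+m31*m33) + ((-1)*m13*m21 + (1)*m11*m23)*(m12*m12+m22*m22+m32*m32 - 1) + ((-1) + (1)*m12*m21 + (-1)*m11*m33 + (-1)*m11*m22)*(m12*m13+m22*m23+m32*m33) + ((1)*m11*m32)*(m13*m13+m23*m23+m33*m33 - 1) + ((1)*m22*m31)*(m11*m21+m12*m22+m13*m23) + ((1)*m31*m32)*(m11*m31+m12*m32+m13*m33) + ((-1)*m12*m31)*(m21*m21+m22*m22+m23*m23 - 1) + ((-1))*(m21*m31+m22*m32+m23*m33) + ((-1)*m12*m31)*(m31*m31+m32*m32+m33*m33 - 1) + ((1)*m32 + (1)*m23)*(m11*m22*m33 + m12*m23*m31 + m13*m21*m32 - m13*m22*m31 - m12*m21*m33 - m11*m23*m32 - 1)" by algebra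
  also have "... = 0" by (simp only: zs mult_zero_right add_0_right add_0_left)
  finally show "(m13-m31)*(m21-m12) = (1+m11+m22+m33)*(m23+m32)" by simp
  have "(m21-m12)*(m32-m23) - (1+m11+m22+m33)*(m13+m31) = ((1)*m13*m22 + (-1)*m12*m23)*(m11*m11+m21*m21+m31*m31 - 1) + ((-1)*m13*m21 + (1)*m11*m23)*(m11*m12+m21*m22+m31*m32) + ((-1) + (1)*m23*m32 + (-1)*m22*m33 + (1)*m12*m21 + (-1)*m11*m22)*(m11*m13+m21*m23+m31*m33) + ((-1)*m23*m31 + (1)*m21*m33)*(m12*m13+m22*m23+m32*m33) + ((1)*m22*m31 + (-1)*m21*m32)*(m13*m13+m23*m23+m33*m33 - 1) + ((-1))*(m11*m31+m12*m32+m13*m33) + ((1)*m31 + (1)*m13)*(m11*m22*m33 + m12*m23*m31 + m13*m21*m32 - m13*m22*m31 - m12*m21*m33 - m11*m23*m32 - 1)" by algebra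
  also have "... = 0" by (simp only: zs mult_zero_right add_0_right add_0_left)
  finally show "(m21-m12)*(m32-m23) = (1+m11+m22+m33)*(m13+m31)" by simp
  have "(m21-m12)*(m13-m31) - (1+m11+m22+m33)*(m23+m32) = ((1)*m12*m31)*(m11*m11+m21*m21+m31*m31 - 1) + ((1)*m13*m22 + (-1)*m12*m23 + (-1)*m11*m31)*(m11*m12+m21*m22+m31*m32) + ((-1)*m13*m32 + (1)*m12*m33)*(m11*m13+m21*m23+m31*m33) + ((-1)*m13*m21 + (1)*m11*m23)*(m12*m12+m22*m22+m32*m32 - 1) + ((-1) + (1)*m12*m21 + (-1)*m11*m33 + (-1)*m11*m22)*(m12*m13+m22*m23+m32*m33) + ((1)*m11*m32)*(m13*m13+m23*m23+m33*m33 - 1) + ((1)*m22*m31)*(m11*m21+m12*m22+m13*m23) + ((1)*m31*m32)*(m11*m31+m12*m32+m13*m33) + ((-1)*m12*m31)*(m21*m21+m22*m22+m23*m23 - 1) + ((-1))*(m21*m31+m22*m32+m23*m33) + ((-1)*m12*m31)*(m31*m31+m32*m32+m33*m33 - 1) + ((1)*m32 + (1)*m23)*(m11*m22*m33 + m12*m23*m31 + m13*m21*m32 - m13*m22*m31 - m12*m21*m33 - m11*m23*m32 - 1)" by algebra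
  also have "... = 0" by (simp only: zs mult_zero_right add_0_right add_0_left)
  finally show "(m21-m12)*(m13-m31) = (1+m11+m22+m33)*(m23+m32)" by simp
  have "(m21-m12)*(m21-m12) - (1+m11+m22+m33)*(1-m11-m22+m33) = ((1) + (-1)*m13^2 + (-1)*m12^2)*(m11*m11+m21*m21+m31*m31 - 1) + ((1)*m11*m12)*(m11*m12+m21*m22+m31*m32) + ((2)*m13*m22 + (-2)*m12*m23 + (1)*m11*m13)*(m11*m13+m21*m23+m31*m33) + ((-2)*m13*m21 + (2)*m11*m23)*(m12*m13+m22*m23+m32*m33) + ((-1) + (2)*m12*m21 + (-2)*m11*m22)*(m13*m13+m23*m23+m33*m33 - 1) + ((1)*m31^2 + (1)*m21^2)*(m11*m11+m12*m12+m13*m13 - 1) + ((-1)*m11*m21)*(m11*m21+m12*m22+m13*m23) + ((-1)*m11*m31)*(m11*m31+m12*m32+m13*m33) + ((1))*(m21*m21+m22*m22+m23*m23 - 1) + ((2)*m33)*(m11*m22*m33 + m12*m23*m31 + m13*m21*m32 - m13*m22*m31 - m12*m21*m33 - m11*m23*m32 - 1)" by algebra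
  also have "... = 0" by (simp only: zs mult_zero_right add_0_right add_0_left)
  finally show "(m21-m12)*(m21-m12) = (1+m11+m22+m33)*(1-m11-m22+m33)" by simp
  have "(m32-m23)*(m32-m23) - (1+m11-m22-m33)*(1+m11+m22+m33) = ((-1) + (2)*m23*m32 + (-2)*m22*m33 + (1)*m13^2 + (1)*m12^2)*(m11*m11+m21*m21+m31*m31 - 1) + ((-2)*m23*m31 + (2)*m21*m33 + (-1)*m11*m12)*(m11*m12+m21*m22+m31*m32) + ((2)*m22*m31 + (-2)*m21*m32 + (-1)*m11*m13)*(m11*m13+m21*m23+m31*m33) + ((1))*(m12*m12+m22*m22+m32*m32 - 1) + ((1))*(m13*m13+m23*m23+m33*m33 - 1) + ((-1)*m31^2 + (-1)*m21^2)*(m11*m11+m12*m12+m13*m13 - 1) + ((1)*m11*m21)*(m11*m21+m12*m22+m13*m23) + ((1)*m11*m31)*(m11*m31+m12*m32+m13*m33) + ((2)*m11)*(m11*m22*m33 + m12*m23*m31 + m13*m21*m32 - m13*m22*m31 - m12*m21*m33 - m11*m23*m32 - 1)" by algebra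
  also have "... = 0" by (simp only: zs mult_zero_right add_0_right add_0_left)
  finally show "(m32-m23)*(m32-m23) = (1+m11-m22-m33)*(1+m11+m22+m33)" by simp
  have "(m32-m23)*(m12+m21) - (1+m11-m22-m33)*(m13-m31) = ((-1)*m13*m22 + (1)*m12*m23)*(m11*m11+m21*m21+m31*m31 - 1) + ((1)*m13*m21 + (-1)*m11*m23)*(m11*m12+m21*m22+m31*m32) + ((-1) + (1)*m23*m32 + (-1)*m22*m33 + (-1)*m12*m21 + (1)*m11*m22)*(m11*m13+m21*m23+m31*m33) + ((-1)*m23*m31 + (1)*m21*m33)*(m12*m13+m22*m23+m32*m33) + ((1)*m22*m31 + (-1)*m21*m32)*(m13*m13+m23*m23+m33*m33 - 1) + ((1))*(m11*m31+m12*m32+m13*m33) + ((-1)*m31 + (1)*m13)*(m11*m22*m33 + m12*m23*m31 + m13*m21*m32 - m13*m22*m31 - m12*m21*m33 - m11*m23*m32 - 1)" by algebra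
  also have "... = 0" by (simp only: zs mult_zero_right add_0_right add_0_left)
  finally show "(m32-m23)*(m12+m21) = (1+m11-m22-m33)*(m13-m31)" by simp
  have "(m32-m23)*(m13+m31) - (1+m11-m22-m33)*(m21-m12) = ((-1)*m13*m32 + (1)*m12*m33)*(m11*m11+m21*m21+m31*m31 - 1) + ((1) + (-1)*m23*m32 + (1)*m22*m33 + (1)*m13*m31 + (-1)*m11*m33)*(m11*m12+m21*m22+m31*m32) + ((-1)*m12*m31 + (1)*m11*m32)*(m11*m13+m21*m23+m31*m33) + ((1)*m23*m31 + (-1)*m21*m33)*(m12*m12+m22*m22+m32*m32 - 1) + ((-1)*m22*m31 + (1)*m21*m32)*(m12*m13+m22*m23+m32*m33) + ((-1))*(m11*m21+m12*m22+m13*m23) + ((1)*m21 + (-1)*m12)*(m11*m22*m33 + m12*m23*m31 + m13*m21*m32 - m13*m22*m31 - m12*m21*m33 - m11*m23*m32 - 1)" by algebra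
  also have "... = 0" by (simp only: zs mult_zero_right add_0_right add_0_left)
  finally show "(m32-m23)*(m13+m31) = (1+m11-m22-m33)*(m21-m12)" by simp
  have "(m12+m21)*(m32-m23) - (1+m11-m22-m33)*(m13-m31) = ((-1)*m13*m22 + (1)*m12*m23)*(m11*m11+m21*m21+m31*m31 - 1) + ((1)*m13*m21 + (-1)*m11*m23)*(m11*m12+m21*m22+m31*m32) + ((-1) + (1)*m23*m32 + (-1)*m22*m33 + (-1)*m12*m21 + (1)*m11*m22)*(m11*m13+m21*m23+m31*m33) + ((-1)*m23*m31 + (1)*m21*m33)*(m12*m13+m22*m23+m32*m33) + ((1)*m22*m31 + (-1)*m21*m32)*(m13*m13+m23*m23+m33*m33 - 1) + ((1))*(m11*m31+m12*m32+m13*m33) + ((-1)*m31 + (1)*m13)*(m11*m22*m33 + m12*m23*m31 + m13*m21*m32 - m13*m22*m31 - m12*m21*m33 - m11*m23*m32 - 1)" by algebra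
  also have "... = 0" by (simp only: zs mult_zero_right add_0_right add_0_left)
  finally show "(m12+m21)*(m32-m23) = (1+m11-m22-m33)*(m13-m31)" by simp
  have "(m12+m21)*(m12+m21) - (1+m11-m22-m33)*(1-m11+m22-m33) = ((1) + (-1)*m13^2 + (-1)*m12^2)*(m11*m11+m21*m21+m31*m31 - 1) + ((1)*m11*m12)*(m11*m12+m21*m22+m31*m32) + ((-2)*m13*m22 + (2)*m12*m23 + (1)*m11*m13)*(m11*m13+m21*m23+m31*m33) + ((2)*m13*m21 + (-2)*m11*m23)*(m12*m13+m22*m23+m32*m33) + ((-1) + (-2)*m12*m21 + (2)*m11*m22)*(m13*m13+m23*m23+m33*m33 - 1) + ((1)*m31^2 + (1)*m21^2)*(m11*m11+m12*m12+m13*m13 - 1) + ((-1)*m11*m21)*(m11*m21+m12*m22+m13*m23) + ((-1)*m11*m31)*(m11*m31+m12*m32+m13*m33) + ((1))*(m21*m21+m22*m22+m23*m23 - 1) + ((-2)*m33)*(m11*m22*m33 + m12*m23*m31 + m13*m21*m32 - m13*m22*m31 - m12*m21*m33 - m11*m23*m32 - 1)" by algebra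
  also have "... = 0" by (simp only: zs mult_zero_right add_0_right add_0_left)
  finally show "(m12+m21)*(m12+m21) = (1+m11-m22-m33)*(1-m11+m22-m33)" by simp
  have "(m12+m21)*(m13+m31) - (1+m11-m22-m33)*(m23+m32) = ((1)*m12*m31)*(m11*m11+m21*m21+m31*m31 - 1) + ((1)*m13*m22 + (-1)*m12*m23 + (-1)*m11*m31)*(m11*m12+m21*m22+m31*m32) + ((-1)*m13*m32 + (1)*m12*m33)*(m11*m13+m21*m23+m31*m33) + ((-1)*m13*m21 + (1)*m11*m23)*(m12*m12+m22*m22+m32*m32 - 1) + ((1) + (1)*m12*m21 + (-1)*m11*m33 + (-1)*m11*m22)*(m12*m13+m22*m23+m32*m33) + ((1)*m11*m32)*(m13*m13+m23*m23+m33*m33 - 1) + ((1)*m22*m31)*(m11*m21+m12*m22+m13*m23) + ((1)*m31*m32)*(m11*m31+m12*m32+m13*m33) + ((-1)*m12*m31)*(m21*m21+m22*m22+m23*m23 - 1) + ((1))*(m21*m31+m22*m32+m23*m33) + ((-1)*m12*m31)*(m31*m31+m32*m32+m33*m33 - 1) + ((1)*m32 + (1)*m23)*(m11*m22*m33 + m12*m23*m31 + m13*m21*m32 - m13*m22*m31 - m12*m21*m33 - m11*m23*m32 - 1)" by algebra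
  also have "... = 0" by (simp only: zs mult_zero_right add_0_right add_0_left)
  finally show "(m12+m21)*(m13+m31) = (1+m11-m22-m33)*(m23+m32)" by simp
  have "(m13+m31)*(m32-m23) - (1+m11-m22-m33)*(m21-m12) = ((-1)*m13*m32 + (1)*m12*m33)*(m11*m11+m21*m21+m31*m31 - 1) + ((1) + (-1)*m23*m32 + (1)*m22*m33 + (1)*m13*m31 + (-1)*m11*m33)*(m11*m12+m21*m22+m31*m32) + ((-1)*m12*m31 + (1)*m11*m32)*(m11*m13+m21*m23+m31*m33) + ((1)*m23*m31 + (-1)*m21*m33)*(m12*m12+m22*m22+m32*m32 - 1) + ((-1)*m22*m31 + (1)*m21*m32)*(m12*m13+m22*m23+m32*m33) + ((-1))*(m11*m21+m12*m22+m13*m23) + ((1)*m21 + (-1)*m12)*(m11*m22*m33 + m12*m23*m31 + m13*m21*m32 - m13*m22*m31 - m12*m21*m33 - m11*m23*m32 - 1)" by algebra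
  also have "... = 0" by (simp only: zs mult_zero_right add_0_right add_0_left)
  finally show "(m13+m31)*(m32-m23) = (1+m11-m22-m33)*(m21-m12)" by simp
  have "(m13+m31)*(m12+m21) - (1+m11-m22-m33)*(m23+m32) = ((1)*m12*m31)*(m11*m11+m21*m21+m31*m31 - 1) + ((1)*m13*m22 + (-1)*m12*m23 + (-1)*m11*m31)*(m11*m12+m21*m22+m31*m32) + ((-1)*m13*m32 + (1)*m12*m33)*(m11*m13+m21*m23+m31*m33) + ((-1)*m13*m21 + (1)*m11*m23)*(m12*m12+m22*m22+m32*m32 - 1) + ((1) + (1)*m12*m21 + (-1)*m11*m33 + (-1)*m11*m22)*(m12*m13+m22*m23+m32*m33) + ((1)*m11*m32)*(m13*m13+m23*m23+m33*m33 - 1) + ((1)*m22*m31)*(m11*m21+m12*m22+m13*m23) + ((1)*m31*m32)*(m11*m31+m12*m32+m13*m33) + ((-1)*m12*m31)*(m21*m21+m22*m22+m23*m23 - 1) + ((1))*(m21*m31+m22*m32+m23*m33) + ((-1)*m12*m31)*(m31*m31+m32*m32+m33*m33 - 1) + ((1)*m32 + (1)*m23)*(m11*m22*m33 + m12*m23*m31 + m13*m21*m32 - m13*m22*m31 - m12*m21*m33 - m11*m23*m32 - 1)" by algebra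
  also have "... = 0" by (simp only: zs mult_zero_right add_0_right add_0_left)
  finally show "(m13+m31)*(m12+m21) = (1+m11-m22-m33)*(m23+m32)" by simp
  have "(m13+m31)*(m13+m31) - (1+m11-m22-m33)*(1-m11-m22+m33) = ((1))*(m11*m11+m21*m21+m31*m31 - 1) + ((2)*m13*m32 + (-2)*m12*m33)*(m11*m12+m21*m22+m31*m32) + ((-2)*m13*m31 + (2)*m11*m33)*(m12*m12+m22*m22+m32*m32 - 1) + ((2)*m12*m31 + (-2)*m11*m32)*(m12*m13+m22*m23+m32*m33) + ((1))*(m13*m13+m23*m23+m33*m33 - 1) + ((-1))*(m21*m21+m22*m22+m23*m23 - 1) + ((-2)*m22)*(m11*m22*m33 + m12*m23*m31 + m13*m21*m32 - m13*m22*m31 - m12*m21*m33 - m11*m23*m32 - 1)" by algebra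
  also have "... = 0" by (simp only: zs mult_zero_right add_0_right add_0_left)
  finally show "(m13+m31)*(m13+m31) = (1+m11-m22-m33)*(1-m11-m22+m33)" by simp
  have "(m13-m31)*(m13-m31) - (1-m11+m22-m33)*(1+m11+m22+m33) = ((1))*(m11*m11+m21*m21+m31*m31 - 1) + ((-2)*m13*m32 + (2)*m12*m33)*(m11*m12+m21*m22+m31*m32) + ((2)*m13*m31 + (-2)*m11*m33)*(m12*m12+m22*m22+m32*m32 - 1) + ((-2)*m12*m31 + (2)*m11*m32)*(m12*m13+m22*m23+m32*m33) + ((1))*(m13*m13+m23*m23+m33*m33 - 1) + ((-1))*(m21*m21+m22*m22+m23*m23 - 1) + ((2)*m22)*(m11*m22*m33 + m12*m23*m31 + m13*m21*m32 - m13*m22*m31 - m12*m21*m33 - m11*m23*m32 - 1)" by algebra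
  also have "... = 0" by (simp only: zs mult_zero_right add_0_right add_0_left)
  finally show "(m13-m31)*(m13-m31) = (1-m11+m22-m33)*(1+m11+m22+m33)" by simp
  have "(m13-m31)*(m12+m21) - (1-m11+m22-m33)*(m32-m23) = ((-1)*m12*m31)*(m11*m11+m21*m21+m31*m31 - 1) + ((1)*m13*m22 + (-1)*m12*m23 + (1)*m11*m31)*(m11*m12+m21*m22+m31*m32) + ((1)*m13*m32 + (-1)*m12*m33)*(m11*m13+m21*m23+m31*m33) + ((-1)*m13*m21 + (1)*m11*m23)*(m12*m12+m22*m22+m32*m32 - 1) + ((1) + (1)*m12*m21 + (1)*m11*m33 + (-1)*m11*m22)*(m12*m13+m22*m23+m32*m33) + ((-1)*m11*m32)*(m13*m13+m23*m23+m33*m33 - 1) + ((-1)*m22*m31)*(m11*m21+m12*m22+m13*m23) + ((-1)*m31*m32)*(m11*m31+m12*m32+m13*m33) + ((1)*m12*m31)*(m21*m21+m22*m22+m23*m23 - 1) + ((-1))*(m21*m31+m22*m32+m23*m33) + ((1)*m12*m31)*(m31*m31+m32*m32+m33*m33 - 1) + ((1)*m32 + (-1)*m23)*(m11*m22*m33 + m12*m23*m31 + m13*m21*m32 - m13*m22*m31 - m12*m21*m33 - m11*m23*m32 - 1)" by algebra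
  also have "... = 0" by (simp only: zs mult_zero_right add_0_right add_0_left)
  finally show "(m13-m31)*(m12+m21) = (1-m11+m22-m33)*(m32-m23)" by simp
  have "(m13-m31)*(m23+m32) - (1-m11+m22-m33)*(m21-m12) = ((-1)*m13*m32 + (1)*m12*m33)*(m11*m11+m21*m21+m31*m31 - 1) + ((-1) + (-1)*m23*m32 + (1)*m22*m33 + (1)*m13*m31 + (-1)*m11*m33)*(m11*m12+m21*m22+m31*m32) + ((-1)*m12*m31 + (1)*m11*m32)*(m11*m13+m21*m23+m31*m33) + ((1)*m23*m31 + (-1)*m21*m33)*(m12*m12+m22*m22+m32*m32 - 1) + ((-1)*m22*m31 + (1)*m21*m32)*(m12*m13+m22*m23+m32*m33) + ((1))*(m11*m21+m12*m22+m13*m23) + ((1)*m21 + (-1)*m12)*(m11*m22*m33 + m12*m23*m31 + m13*m21*m32 - m13*m22*m31 - m12*m21*m33 - m11*m23*m32 - 1)" by algebra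
  also have "... = 0" by (simp only: zs mult_zero_right add_0_right add_0_left)
  finally show "(m13-m31)*(m23+m32) = (1-m11+m22-m33)*(m21-m12)" by simp
  have "(m12+m21)*(m13-m31) - (1-m11+m22-m33)*(m32-m23) = ((-1)*m12*m31)*(m11*m11+m21*m21+m31*m31 - 1) + ((1)*m13*m22 + (-1)*m12*m23 + (1)*m11*m31)*(m11*m12+m21*m22+m31*m32) + ((1)*m13*m32 + (-1)*m12*m33)*(m11*m13+m21*m23+m31*m33) + ((-1)*m13*m21 + (1)*m11*m23)*(m12*m12+m22*m22+m32*m32 - 1) + ((1) + (1)*m12*m21 + (1)*m11*m33 + (-1)*m11*m22)*(m12*m13+m22*m23+m32*m33) + ((-1)*m11*m32)*(m13*m13+m23*m23+m33*m33 - 1) + ((-1)*m22*m31)*(m11*m21+m12*m22+m13*m23) + ((-1)*m31*m32)*(m11*m31+m12*m32+m13*m33) + ((1)*m12*m31)*(m21*m21+m22*m22+m23*m23 - 1) + ((-1))*(m21*m31+m22*m32+m23*m33) + ((1)*m12*m31)*(m31*m31+m32*m32+m33*m33 - 1) + ((1)*m32 + (-1)*m23)*(m11*m22*m33 + m12*m23*m31 + m13*m21*m32 - m13*m22*m31 - m12*m21*m33 - m11*m23*m32 - 1)" by algebra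
  also have "... = 0" by (simp only: zs mult_zero_right add_0_right add_0_left)
  finally show "(m12+m21)*(m13-m31) = (1-m11+m22-m33)*(m32-m23)" by simp
  have "(m12+m21)*(m12+m21) - (1-m11+m22-m33)*(1+m11-m22-m33) = ((1) + (-1)*m13^2 + (-1)*m12^2)*(m11*m11+m21*m21+m31*m31 - 1) + ((1)*m11*m12)*(m11*m12+m21*m22+m31*m32) + ((-2)*m13*m22 + (2)*m12*m23 + (1)*m11*m13)*(m11*m13+m21*m23+m31*m33) + ((2)*m13*m21 + (-2)*m11*m23)*(m12*m13+m22*m23+m32*m33) + ((-1) + (-2)*m12*m21 + (2)*m11*m22)*(m13*m13+m23*m23+m33*m33 - 1) + ((1)*m31^2 + (1)*m21^2)*(m11*m11+m12*m12+m13*m13 - 1) + ((-1)*m11*m21)*(m11*m21+m12*m22+m13*m23) + ((-1)*m11*m31)*(m11*m31+m12*m32+m13*m33) + ((1))*(m21*m21+m22*m22+m23*m23 - 1) + ((-2)*m33)*(m11*m22*m33 + m12*m23*m31 + m13*m21*m32 - m13*m22*m31 - m12*m21*m33 - m11*m23*m32 - 1)" by algebra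
  also have "... = 0" by (simp only: zs mult_zero_right add_0_right add_0_left)
  finally show "(m12+m21)*(m12+m21) = (1-m11+m22-m33)*(1+m11-m22-m33)" by simp
  have "(m12+m21)*(m23+m32) - (1-m11+m22-m33)*(m13+m31) = ((1)*m13*m22 + (-1)*m12*m23)*(m11*m11+m21*m21+m31*m31 - 1) + ((-1)*m13*m21 + (1)*m11*m23)*(m11*m12+m21*m22+m31*m32) + ((1) + (1)*m23*m32 + (-1)*m22*m33 + (1)*m12*m21 + (-1)*m11*m22)*(m11*m13+m21*m23+m31*m33) + ((-1)*m23*m31 + (1)*m21*m33)*(m12*m13+m22*m23+m32*m33) + ((1)*m22*m31 + (-1)*m21*m32)*(m13*m13+m23*m23+m33*m33 - 1) + ((1))*(m11*m31+m12*m32+m13*m33) + ((1)*m31 + (1)*m13)*(m11*m22*m33 + m12*m23*m31 + m13*m21*m32 - m13*m22*m31 - m12*m21*m33 - m11*m23*m32 - 1)" by algebra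
  also have "... = 0" by (simp only: zs mult_zero_right add_0_right add_0_left)
  finally show "(m12+m21)*(m23+m32) = (1-m11+m22-m33)*(m13+m31)" by simp
  have "(m23+m32)*(m13-m31) - (1-m11+m22-m33)*(m21-m12) = ((-1)*m13*m32 + (1)*m12*m33)*(m11*m11+m21*m21+m31*m31 - 1) + ((-1) + (-1)*m23*m32 + (1)*m22*m33 + (1)*m13*m31 + (-1)*m11*m33)*(m11*m12+m21*m22+m31*m32) + ((-1)*m12*m31 + (1)*m11*m32)*(m11*m13+m21*m23+m31*m33) + ((1)*m23*m31 + (-1)*m21*m33)*(m12*m12+m22*m22+m32*m32 - 1) + ((-1)*m22*m31 + (1)*m21*m32)*(m12*m13+m22*m23+m32*m33) + ((1))*(m11*m21+m12*m22+m13*m23) + ((1)*m21 + (-1)*m12)*(m11*m22*m33 + m12*m23*m31 + m13*m21*m32 - m13*m22*m31 - m12*m21*m33 - m11*m23*m32 - 1)" by algebra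
  also have "... = 0" by (simp only: zs mult_zero_right add_0_right add_0_left)
  finally show "(m23+m32)*(m13-m31) = (1-m11+m22-m33)*(m21-m12)" by simp
  have "(m23+m32)*(m12+m21) - (1-m11+m22-m33)*(m13+m31) = ((1)*m13*m22 + (-1)*m12*m23)*(m11*m11+m21*m21+m31*m31 - 1) + ((-1)*m13*m21 + (1)*m11*m23)*(m11*m12+m21*m22+m31*m32) + ((1) + (1)*m23*m32 + (-1)*m22*m33 + (1)*m12*m21 + (-1)*m11*m22)*(m11*m13+m21*m23+m31*m33) + ((-1)*m23*m31 + (1)*m21*m33)*(m12*m13+m22*m23+m32*m33) + ((1)*m22*m31 + (-1)*m21*m32)*(m13*m13+m23*m23+m33*m33 - 1) + ((1))*(m11*m31+m12*m32+m13*m33) + ((1)*m31 + (1)*m13)*(m11*m22*m33 + m12*m23*m31 + m13*m21*m32 - m13*m22*m31 - m12*m21*m33 - m11*m23*m32 - 1)" by algebra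
  also have "... = 0" by (simp only: zs mult_zero_right add_0_right add_0_left)
  finally show "(m23+m32)*(m12+m21) = (1-m11+m22-m33)*(m13+m31)" by simp
  have "(m23+m32)*(m23+m32) - (1-m11+m22-m33)*(1-m11-m22+m33) = ((-1) + (-2)*m23*m32 + (2)*m22*m33 + (1)*m13^2 + (1)*m12^2)*(m11*m11+m21*m21+m31*m31 - 1) + ((2)*m23*m31 + (-2)*m21*m33 + (-1)*m11*m12)*(m11*m12+m21*m22+m31*m32) + ((-2)*m22*m31 + (2)*m21*m32 + (-1)*m11*m13)*(m11*m13+m21*m23+m31*m33) + ((1))*(m12*m12+m22*m22+m32*m32 - 1) + ((1))*(m13*m13+m23*m23+m33*m33 - 1) + ((-1)*m31^2 + (-1)*m21^2)*(m11*m11+m12*m12+m13*m13 - 1) + ((1)*m11*m21)*(m11*m21+m12*m22+m13*m23) + ((1)*m11*m31)*(m11*m31+m12*m32+m13*m33) + ((-2)*m11)*(m11*m22*m33 + m12*m23*m31 + m13*m21*m32 - m13*m22*m31 - m12*m21*m33 - m11*m23*m32 - 1)" by algebra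
  also have "... = 0" by (simp only: zs mult_zero_right add_0_right add_0_left)
  finally show "(m23+m32)*(m23+m32) = (1-m11+m22-m33)*(1-m11-m22+m33)" by simp
  have "(m21-m12)*(m21-m12) - (1-m11-m22+m33)*(1+m11+m22+m33) = ((1) + (-1)*m13^2 + (-1)*m12^2)*(m11*m11+m21*m21+m31*m31 - 1) + ((1)*m11*m12)*(m11*m12+m21*m22+m31*m32) + ((2)*m13*m22 + (-2)*m12*m23 + (1)*m11*m13)*(m11*m13+m21*m23+m31*m33) + ((-2)*m13*m21 + (2)*m11*m23)*(m12*m13+m22*m23+m32*m33) + ((-1) + (2)*m12*m21 + (-2)*m11*m22)*(m13*m13+m23*m23+m33*m33 - 1) + ((1)*m31^2 + (1)*m21^2)*(m11*m11+m12*m12+m13*m13 - 1) + ((-1)*m11*m21)*(m11*m21+m12*m22+m13*m23) + ((-1)*m11*m31)*(m11*m31+m12*m32+m13*m33) + ((1))*(m21*m21+m22*m22+m23*m23 - 1) + ((2)*m33)*(m11*m22*m33 + m12*m23*m31 + m13*m21*m32 - m13*m22*m31 - m12*m21*m33 - m11*m23*m32 - 1)" by algebra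
  also have "... = 0" by (simp only: zs mult_zero_right add_0_right add_0_left)
  finally show "(m21-m12)*(m21-m12) = (1-m11-m22+m33)*(1+m11+m22+m33)" by simp
  have "(m21-m12)*(m13+m31) - (1-m11-m22+m33)*(m32-m23) = ((-1)*m12*m31)*(m11*m11+m21*m21+m31*m31 - 1) + ((1)*m13*m22 + (-1)*m12*m23 + (1)*m11*m31)*(m11*m12+m21*m22+m31*m32) + ((1)*m13*m32 + (-1)*m12*m33)*(m11*m13+m21*m23+m31*m33) + ((-1)*m13*m21 + (1)*m11*m23)*(m12*m12+m22*m22+m32*m32 - 1) + ((-1) + (1)*m12*m21 + (1)*m11*m33 + (-1)*m11*m22)*(m12*m13+m22*m23+m32*m33) + ((-1)*m11*m32)*(m13*m13+m23*m23+m33*m33 - 1) + ((-1)*m22*m31)*(m11*m21+m12*m22+m13*m23) + ((-1)*m31*m32)*(m11*m31+m12*m32+m13*m33) + ((1)*m12*m31)*(m21*m21+m22*m22+m23*m23 - 1) + ((1))*(m21*m31+m22*m32+m23*m33) + ((1)*m12*m31)*(m31*m31+m32*m32+m33*m33 - 1) + ((1)*m32 + (-1)*m23)*(m11*m22*m33 + m12*m23*m31 + m13*m21*m32 - m13*m22*m31 - m12*m21*m33 - m11*m23*m32 - 1)" by algebra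
  also have "... = 0" by (simp only: zs mult_zero_right add_0_right add_0_left)
  finally show "(m21-m12)*(m13+m31) = (1-m11-m22+m33)*(m32-m23)" by simp
  have "(m21-m12)*(m23+m32) - (1-m11-m22+m33)*(m13-m31) = ((-1)*m13*m22 + (1)*m12*m23)*(m11*m11+m21*m21+m31*m31 - 1) + ((1)*m13*m21 + (-1)*m11*m23)*(m11*m12+m21*m22+m31*m32) + ((1) + (1)*m23*m32 + (-1)*m22*m33 + (-1)*m12*m21 + (1)*m11*m22)*(m11*m13+m21*m23+m31*m33) + ((-1)*m23*m31 + (1)*m21*m33)*(m12*m13+m22*m23+m32*m33) + ((1)*m22*m31 + (-1)*m21*m32)*(m13*m13+m23*m23+m33*m33 - 1) + ((-1))*(m11*m31+m12*m32+m13*m33) + ((-1)*m31 + (1)*m13)*(m11*m22*m33 + m12*m23*m31 + m13*m21*m32 - m13*m22*m31 - m12*m21*m33 - m11*m23*m32 - 1)" by algebra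
  also have "... = 0" by (simp only: zs mult_zero_right add_0_right add_0_left)
  finally show "(m21-m12)*(m23+m32) = (1-m11-m22+m33)*(m13-m31)" by simp
  have "(m13+m31)*(m21-m12) - (1-m11-m22+m33)*(m32-m23) = ((-1)*m12*m31)*(m11*m11+m21*m21+m31*m31 - 1) + ((1)*m13*m22 + (-1)*m12*m23 + (1)*m11*m31)*(m11*m12+m21*m22+m31*m32) + ((1)*m13*m32 + (-1)*m12*m33)*(m11*m13+m21*m23+m31*m33) + ((-1)*m13*m21 + (1)*m11*m23)*(m12*m12+m22*m22+m32*m32 - 1) + ((-1) + (1)*m12*m21 + (1)*m11*m33 + (-1)*m11*m22)*(m12*m13+m22*m23+m32*m33) + ((-1)*m11*m32)*(m13*m13+m23*m23+m33*m33 - 1) + ((-1)*m22*m31)*(m11*m21+m12*m22+m13*m23) + ((-1)*m31*m32)*(m11*m31+m12*m32+m13*m33) + ((1)*m12*m31)*(m21*m21+m22*m22+m23*m23 - 1) + ((1))*(m21*m31+m22*m32+m23*m33) + ((1)*m12*m31)*(m31*m31+m32*m32+m33*m33 - 1) + ((1)*m32 + (-1)*m23)*(m11*m22*m33 + m12*m23*m31 + m13*m21*m32 - m13*m22*m31 - m12*m21*m33 - m11*m23*m32 - 1)" by algebra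
  also have "... = 0" by (simp only: zs mult_zero_right add_0_right add_0_left)
  finally show "(m13+m31)*(m21-m12) = (1-m11-m22+m33)*(m32-m23)" by simp
  have "(m13+m31)*(m13+m31) - (1-m11-m22+m33)*(1+m11-m22-m33) = ((1))*(m11*m11+m21*m21+m31*m31 - 1) + ((2)*m13*m32 + (-2)*m12*m33)*(m11*m12+m21*m22+m31*m32) + ((-2)*m13*m31 + (2)*m11*m33)*(m12*m12+m22*m22+m32*m32 - 1) + ((2)*m12*m31 + (-2)*m11*m32)*(m12*m13+m22*m23+m32*m33) + ((1))*(m13*m13+m23*m23+m33*m33 - 1) + ((-1))*(m21*m21+m22*m22+m23*m23 - 1) + ((-2)*m22)*(m11*m22*m33 + m12*m23*m31 + m13*m21*m32 - m13*m22*m31 - m12*m21*m33 - m11*m23*m32 - 1)" by algebra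
  also have "... = 0" by (simp only: zs mult_zero_right add_0_right add_0_left)
  finally show "(m13+m31)*(m13+m31) = (1-m11-m22+m33)*(1+m11-m22-m33)" by simp
  have "(m13+m31)*(m23+m32) - (1-m11-m22+m33)*(m12+m21) = ((-1)*m13*m32 + (1)*m12*m33)*(m11*m11+m21*m21+m31*m31 - 1) + ((1) + (1)*m23*m32 + (-1)*m22*m33 + (1)*m13*m31 + (-1)*m11*m33)*(m11*m12+m21*m22+m31*m32) + ((-1)*m12*m31 + (1)*m11*m32)*(m11*m13+m21*m23+m31*m33) + ((-1)*m23*m31 + (1)*m21*m33)*(m12*m12+m22*m22+m32*m32 - 1) + ((1)*m22*m31 + (-1)*m21*m32)*(m12*m13+m22*m23+m32*m33) + ((1))*(m11*m21+m12*m22+m13*m23) + ((1)*m21 + (1)*m12)*(m11*m22*m33 + m12*m23*m31 + m13*m21*m32 - m13*m22*m31 - m12*m21*m33 - m11*m23*m32 - 1)" by algebra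
  also have "... = 0" by (simp only: zs mult_zero_right add_0_right add_0_left)
  finally show "(m13+m31)*(m23+m32) = (1-m11-m22+m33)*(m12+m21)" by simp
  have "(m23+m32)*(m21-m12) - (1-m11-m22+m33)*(m13-m31) = ((-1)*m13*m22 + (1)*m12*m23)*(m11*m11+m21*m21+m31*m31 - 1) + ((1)*m13*m21 + (-1)*m11*m23)*(m11*m12+m21*m22+m31*m32) + ((1) + (1)*m23*m32 + (-1)*m22*m33 + (-1)*m12*m21 + (1)*m11*m22)*(m11*m13+m21*m23+m31*m33) + ((-1)*m23*m31 + (1)*m21*m33)*(m12*m13+m22*m23+m32*m33) + ((1)*m22*m31 + (-1)*m21*m32)*(m13*m13+m23*m23+m33*m33 - 1) + ((-1))*(m11*m31+m12*m32+m13*m33) + ((-1)*m31 + (1)*m13)*(m11*m22*m33 + m12*m23*m31 + m13*m21*m32 - m13*m22*m31 - m12*m21*m33 - m11*m23*m32 - 1)" by algebra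
  also have "... = 0" by (simp only: zs mult_zero_right add_0_right add_0_left)
  finally show "(m23+m32)*(m21-m12) = (1-m11-m22+m33)*(m13-m31)" by simp
  have "(m23+m32)*(m13+m31) - (1-m11-m22+m33)*(m12+m21) = ((-1)*m13*m32 + (1)*m12*m33)*(m11*m11+m21*m21+m31*m31 - 1) + ((1) + (1)*m23*m32 + (-1)*m22*m33 + (1)*m13*m31 + (-1)*m11*m33)*(m11*m12+m21*m22+m31*m32) + ((-1)*m12*m31 + (1)*m11*m32)*(m11*m13+m21*m23+m31*m33) + ((-1)*m23*m31 + (1)*m21*m33)*(m12*m12+m22*m22+m32*m32 - 1) + ((1)*m22*m31 + (-1)*m21*m32)*(m12*m13+m22*m23+m32*m33) + ((1))*(m11*m21+m12*m22+m13*m23) + ((1)*m21 + (1)*m12)*(m11*m22*m33 + m12*m23*m31 + m13*m21*m32 - m13*m22*m31 - m12*m21*m33 - m11*m23*m32 - 1)" by algebra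
  also have "... = 0" by (simp only: zs mult_zero_right add_0_right add_0_left)
  finally show "(m23+m32)*(m13+m31) = (1-m11-m22+m33)*(m12+m21)" by simp
  have "(m23+m32)*(m23+m32) - (1-m11-m22+m33)*(1-m11+m22-m33) = ((-1) + (-2)*m23*m32 + (2)*m22*m33 + (1)*m13^2 + (1)*m12^2)*(m11*m11+m21*m21+m31*m31 - 1) + ((2)*m23*m31 + (-2)*m21*m33 + (-1)*m11*m12)*(m11*m12+m21*m22+m31*m32) + ((-2)*m22*m31 + (2)*m21*m32 + (-1)*m11*m13)*(m11*m13+m21*m23+m31*m33) + ((1))*(m12*m12+m22*m22+m32*m32 - 1) + ((1))*(m13*m13+m23*m23+m33*m33 - 1) + ((-1)*m31^2 + (-1)*m21^2)*(m11*m11+m12*m12+m13*m13 - 1) + ((1)*m11*m21)*(m11*m21+m12*m22+m13*m23) + ((1)*m11*m31)*(m11*m31+m12*m32+m13*m33) + ((-2)*m11)*(m11*m22*m33 + m12*m23*m31 + m13*m21*m32 - m13*m22*m31 - m12*m21*m33 - m11*m23*m32 - 1)" by algebra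
  also have "... = 0" by (simp only: zs mult_zero_right add_0_right add_0_left)
  finally show "(m23+m32)*(m23+m32) = (1-m11-m22+m33)*(1-m11+m22-m33)" by simp
qed


definition Qmat :: "mat3 \<Rightarrow> nat \<Rightarrow> nat \<Rightarrow> complex" where
  "Qmat M x y = [[(1+M$1$1+M$2$2+M$3$3), (M$3$2-M$2$3), (M$1$3-M$3$1), (M$2$1-M$1$2)], [(M$3$2-M$2$3), (1+M$1$1-M$2$2-M$3$3), (M$1$2+M$2$1), (M$1$3+M$3$1)], [(M$1$3-M$3$1), (M$1$2+M$2$1), (1-M$1$1+M$2$2-M$3$3), (M$2$3+M$3$2)], [(M$2$1-M$1$2), (M$1$3+M$3$1), (M$2$3+M$3$2), (1-M$1$1-M$2$2+M$3$3)]] ! x ! y"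

lemma Qmat_simps:
  "Qmat M 0 0 = (1+M$1$1+M$2$2+M$3$3)"
  "Qmat M 0 1 = (M$3$2-M$2$3)"
  "Qmat M 0 2 = (M$1$3-M$3$1)"
  "Qmat M 0 3 = (M$2$1-M$1$2)"
  "Qmat M 1 0 = (M$3$2-M$2$3)"
  "Qmat M 1 1 = (1+M$1$1-M$2$2-M$3$3)"
  "Qmat M 1 2 = (M$1$2+M$2$1)"
  "Qmat M 1 3 = (M$1$3+M$3$1)"
  "Qmat M 2 0 = (M$1$3-M$3$1)"
  "Qmat M 2 1 = (M$1$2+M$2$1)"
  "Qmat M 2 2 = (1-M$1$1+M$2$2-M$3$3)"
  "Qmat M 2 3 = (M$2$3+M$3$2)"
  "Qmat M 3 0 = (M$2$1-M$1$2)"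
  "Qmat M 3 1 = (M$1$3+M$3$1)"
  "Qmat M 3 2 = (M$2$3+M$3$2)"
  "Qmat M 3 3 = (1-M$1$1-M$2$2+M$3$3)"
  by (simp_all add: Qmat_def numeral_2_eq_2 numeral_3_eq_3)

lemma less4_cases: "(x::nat) < 4 \<Longrightarrow> x = 0 \<or> x = 1 \<or> x = 2 \<or> x = 3" by auto

lemma Q_rank1:
  assumes A: "transpose M ** M = mat 1" and D: "det M = 1"
    and xyz: "x < 4" "y < 4" "z < 4"
  shows "Qmat M x y * Qmat M x z = Qmat M x x * Qmat M y z"
proof -
  have B: "M ** transpose M = mat 1" using A matrix_left_right_inverse by blast
  have c: "(\<Sum>k\<in>UNIV. M$k$i * M$k$j) = (if i = j then 1 else 0)" for i j
  proof -
    have "(transpose M ** M)$i$j = mat 1 $i$j" using A by simp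
    then show ?thesis by (simp add: matrix_matrix_mult_def transpose_def mat_def)
  qed
  have r: "(\<Sum>k\<in>UNIV. M$i$k * M$j$k) = (if i = j then 1 else 0)" for i j
  proof -
    have "(M ** transpose M)$i$j = mat 1 $i$j" using B by simp
    then show ?thesis by (simp add: matrix_matrix_mult_def transpose_def mat_def)
  qed
  have d: "M$1$1*M$2$2*M$3$3 + M$1$2*M$2$3*M$3$1 + M$1$3*M$2$1*M$3$2 - M$1$3*M$2$2*M$3$1 - M$1$2*M$2$1*M$3$3 - M$1$1*M$2$3*M$3$2 - 1 = 0"
    using D unfolding det_3 by (simp add: algebra_simps)
  have g0: "M$1$1*M$1$1+M$2$1*M$2$1+M$3$1*M$3$1 - 1 = 0" using c[of 1 1] by (simp add: sum_3)
  have g1: "M$1$1*M$1$2+M$2$1*M$2$2+M$3$1*M$3$2 = 0" using c[of 1 2] by (simp add: sum_3)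
  have g2: "M$1$1*M$1$3+M$2$1*M$2$3+M$3$1*M$3$3 = 0" using c[of 1 3] by (simp add: sum_3)
  have g3: "M$1$2*M$1$2+M$2$2*M$2$2+M$3$2*M$3$2 - 1 = 0" using c[of 2 2] by (simp add: sum_3)
  have g4: "M$1$2*M$1$3+M$2$2*M$2$3+M$3$2*M$3$3 = 0" using c[of 2 3] by (simp add: sum_3)
  have g5: "M$1$3*M$1$3+M$2$3*M$2$3+M$3$3*M$3$3 - 1 = 0" using c[of 3 3] by (simp add: sum_3)
  have g6: "M$1$1*M$1$1+M$1$2*M$1$2+M$1$3*M$1$3 - 1 = 0" using r[of 1 1] by (simp add: sum_3)
  have g7: "M$1$1*M$2$1+M$1$2*M$2$2+M$1$3*M$2$3 = 0" using r[of 1 2] by (simp add: sum_3)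
  have g8: "M$1$1*M$3$1+M$1$2*M$3$2+M$1$3*M$3$3 = 0" using r[of 1 3] by (simp add: sum_3)
  have g9: "M$2$1*M$2$1+M$2$2*M$2$2+M$2$3*M$2$3 - 1 = 0" using r[of 2 2] by (simp add: sum_3)
  have g10: "M$2$1*M$3$1+M$2$2*M$3$2+M$2$3*M$3$3 = 0" using r[of 2 3] by (simp add: sum_3)
  have g11: "M$3$1*M$3$1+M$3$2*M$3$2+M$3$3*M$3$3 - 1 = 0" using r[of 3 3] by (simp add: sum_3)
  note ids = so3_ids[of "M$1$1" "M$2$1" "M$3$1" "M$1$2" "M$2$2" "M$3$2" "M$1$3" "M$2$3" "M$3$3", OF g0 g1 g2 g3 g4 g5 g6 g7 g8 g9 g10 g11 d]
  show ?thesis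
    using less4_cases[OF xyz(1)] less4_cases[OF xyz(2)] less4_cases[OF xyz(3)]
    apply (elim disjE)
    apply (simp_all only: Qmat_simps ids)
    apply (simp_all add: mult.commute)
    done
qed

lemma rank1_factor:
  fixes Q :: "nat \<Rightarrow> nat \<Rightarrow> complex"
  assumes r: "\<And>x y z. x<4 \<Longrightarrow> y<4 \<Longrightarrow> z<4 \<Longrightarrow> Q x y * Q x z = Q x x * Q y z"
    and tr: "Q 0 0 + Q 1 1 + Q 2 2 + Q 3 3 = 4"
  shows "\<exists>v. \<forall>y<4. \<forall>z<4. Q y z = 4 * v y * v z"
proof -
  obtain x where x: "x < 4" "Q x x \<noteq> 0"
  proof -
    have "\<exists>x<4. Q x x \<noteq> 0"
    proof (rule ccontr)
      assume "\<not> ?thesis"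
      then have "Q 0 0 = 0" "Q 1 1 = 0" "Q 2 2 = 0" "Q 3 3 = 0" by auto
      then show False using tr by simp
    qed
    then show ?thesis using that by blast
  qed
  define r where "r = csqrt (Q x x) / 2"
  have r2: "4*r*r = Q x x" unfolding r_def by (simp add: power2_eq_square[symmetric])
  have rnz: "r \<noteq> 0" using r2 x(2) by auto
  define v where "v y = Q x y / (4*r)" for y
  show ?thesis
  proof (intro exI allI impI)
    fix y z :: nat assume yz: "y < 4" "z < 4"
    have "4 * v y * v z = Q x y * Q x z / (4*r*r)" unfolding v_def using rnz by (simp add: field_simps)
    also have "... = Q x x * Q y z / Q x x" using r[OF x(1) yz] r2 by simp
    also have "... = Q y z" using x(2) by simp
    finally show "Q y z = 4 * v y * v z" by simp
  qed
qed

lemma SO3_sur: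
  assumes A: "transpose M ** M = mat 1" and D: "det M = 1"
  shows "\<exists>q. Rm q = M"
proof -
  have "\<exists>v. \<forall>y<4. \<forall>z<4. Qmat M y z = 4 * v y * v z"
  proof (rule rank1_factor)
    show "Qmat M x y * Qmat M x z = Qmat M x x * Qmat M y z" if "x<4" "y<4" "z<4" for x y z
      using Q_rank1[OF A D that] .
    show "Qmat M 0 0 + Qmat M 1 1 + Qmat M 2 2 + Qmat M 3 3 = 4"
      by (simp add: Qmat_def numeral_eq_Suc)
  qed
  then obtain v where v: "\<forall>y<4. \<forall>z<4. Qmat M y z = 4 * v y * v z" by blast
  define a b c d where "a = v 0" "b = v 1" "c = v 2" "d = v 3"
  have e: "1+M$1$1+M$2$2+M$3$3 = 4*a*a" "1+M$1$1-M$2$2-M$3$3 = 4*b*b"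
    "1-M$1$1+M$2$2-M$3$3 = 4*c*c" "1-M$1$1-M$2$2+M$3$3 = 4*d*d"
    "M$3$2-M$2$3 = 4*a*b" "M$1$3-M$3$1 = 4*a*c" "M$2$1-M$1$2 = 4*a*d"
    "M$1$2+M$2$1 = 4*b*c" "M$1$3+M$3$1 = 4*b*d" "M$2$3+M$3$2 = 4*c*d"
    using v[rule_format, of 0 0] v[rule_format, of 1 1] v[rule_format, of 2 2] v[rule_format, of 3 3]
      v[rule_format, of 0 1] v[rule_format, of 0 2] v[rule_format, of 0 3]
      v[rule_format, of 1 2] v[rule_format, of 1 3] v[rule_format, of 2 3]
    by (simp_all add: Qmat_def a_b_c_d_def numeral_eq_Suc)
  have "Rm (a,b,c,d) = M"
    unfolding vec_eq_iff forall_3 Rm_nth Rent_simps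
    using e by (intro conjI; algebra)
  then show ?thesis by blast
qed

section \<open>Homogeneity and vanishing\<close>

lemma monomial_eval_scale:
  "monomial_eval a (\<chi> i j. c * M$i$j) = c ^ total_degree a * monomial_eval a M"
  unfolding monomial_eval_def total_degree_def power_sum
  by (simp add: power_mult_distrib prod.distrib)

lemma poly_eval_scale:
  assumes "p \<in> homog_polys d"
  shows "poly_eval p (\<chi> i j. c * M$i$j) = c ^ d * poly_eval p M"
proof -
  have "poly_eval p (\<chi> i j. c * M$i$j) = (\<Sum>a\<in>{a. p a \<noteq> 0}. p a * (c ^ d * monomial_eval a M))"
    unfolding poly_eval_def monomial_eval_scale
    using assms by (intro sum.cong) (auto simp: homog_polys_def)
  also have "... = c ^ d * poly_eval p M"
    unfolding poly_eval_def sum_distrib_left by (simp add: algebra_simps)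
  finally show ?thesis .
qed

lemma det_sq_O3: fixes M :: mat3 assumes "transpose M ** M = mat 1" shows "det M = 1 \<or> det M = -1"
proof -
  have "det (transpose M ** M) = det (mat 1 :: mat3)" using assms by (rule arg_cong)
  then have "det (transpose M) * det M = 1" by (simp only: det_mul det_I)
  then have "det M * det M = 1" by (simp only: det_transpose)
  then show ?thesis by (simp only: square_eq_1_iff)
qed

lemma vanish_from_R:
  assumes p: "p \<in> homog_polys d" and z: "\<And>q. poly_eval p (Rm q) = 0"
  shows "\<forall>x\<in>cone_O3. poly_eval p x = 0"
proof -
  have O: "poly_eval p M = 0" if M: "M \<in> O3" for M
  proof -
    have A: "transpose M ** M = mat 1" using M by (simp add: O3_def)
    show ?thesis
    proof (cases "det M = 1")
      case True
      then obtain q where "Rm q = M" using SO3_sur[OF A] by blast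
      then show ?thesis using z by blast
    next
      case False
      then have D: "det M = -1" using det_sq_O3[OF A] by blast
      define M' :: mat3 where "M' = (\<chi> i j. (-1) * M$i$j)"
      have "transpose M' ** M' = transpose M ** M"
        by (simp add: M'_def vec_eq_iff matrix_matrix_mult_def transpose_def)
      then have A': "transpose M' ** M' = mat 1" using A by simp
      have "det M' = - det M" unfolding M'_def det_3 by simp
      then have "det M' = 1" using D by simp
      then obtain q where "Rm q = M'" using SO3_sur[OF A'] by blast
      then have "poly_eval p M' = 0" using z by blast
      then have "(-1) ^ d * poly_eval p M = 0" unfolding M'_def poly_eval_scale[OF p] .
      then show ?thesis by simp
    qed
  qed
  have "\<forall>x\<in>S0. poly_eval p x = 0"
  proof
    fix x assume "x \<in> S0"
    then obtain c M where x: "x = (\<chi> i j. c * M$i$j)" and M: "M \<in> O3" unfolding S0_def by blast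
    show "poly_eval p x = 0" unfolding x poly_eval_scale[OF p] using O[OF M] by simp
  qed
  moreover have "p \<in> polys" using p by (simp add: homog_polys_def)
  ultimately show ?thesis unfolding cone_O3_S0 zariski_closure_def by blast
qed

lemma vs_fun: "vector_space (\<lambda>(c::complex) (f::'a \<Rightarrow> complex) x. c * f x)"
  by unfold_locales (simp_all add: fun_eq_iff algebra_simps)

interpretation VM: vector_space "\<lambda>(c::complex) (f::mat3 \<Rightarrow> complex) x. c * f x"
  by (rule vs_fun)

interpretation VQ: vector_space "\<lambda>(c::complex) (f::q4 \<Rightarrow> complex) x. c * f x"
  by (rule vs_fun)

lemma dim_image_eq_gen:
  assumes lf: "Vector_Spaces.linear s1 s2 f" and fi: "inj_on f (module.span s1 S)"
  shows "vector_space.dim s2 (f ` S) = vector_space.dim s1 S"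
proof -
  interpret lf: Vector_Spaces.linear s1 s2 f by fact
  obtain B where B: "B \<subseteq> S" "lf.vs1.independent B" "S \<subseteq> lf.vs1.span B" "card B = lf.vs1.dim S"
    using lf.vs1.basis_exists[of S] by auto
  then have "lf.vs1.span S = lf.vs1.span B"
    using lf.vs1.span_mono[of B S] lf.vs1.span_mono[of S "lf.vs1.span B"] lf.vs1.span_span[of B] by auto
  moreover have "card (f ` B) = card B"
    using assms card_image[of f B] inj_on_subset[of f "lf.vs1.span S" B] B lf.vs1.span_superset by auto
  moreover have "(f ` B) \<subseteq> (f ` S)"
    using B by auto
  ultimately show ?thesis
    by (metis B(2) B(4) fi lf.dependent_inj_imageD lf.span_image lf.vs2.dim_eq_card_independent lf.vs2.dim_span)
qed

lemma sum_fun_app: "(\<Sum>a\<in>A. f a) x = (\<Sum>a\<in>A. f a x)"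
  by (induction A rule: infinite_finite_induct) auto

section \<open>Polynomials\<close>

lemma poly_eval_superset:
  assumes "finite A" "{a. p a \<noteq> 0} \<subseteq> A"
  shows "poly_eval p M = (\<Sum>a\<in>A. p a * monomial_eval a M)"
  unfolding poly_eval_def using assms by (intro sum.mono_neutral_left) auto

lemma poly_eval_add:
  assumes "p \<in> polys" "p' \<in> polys"
  shows "poly_eval (\<lambda>a. p a + p' a) M = poly_eval p M + poly_eval p' M"
proof -
  let ?A = "{a. p a \<noteq> 0} \<union> {a. p' a \<noteq> 0}"
  have f: "finite ?A" using assms by (simp add: polys_def)
  have "poly_eval (\<lambda>a. p a + p' a) M = (\<Sum>a\<in>?A. (p a + p' a) * monomial_eval a M)"
    by (rule poly_eval_superset[OF f]) auto
  also have "... = (\<Sum>a\<in>?A. p a * monomial_eval a M) + (\<Sum>a\<in>?A. p' a * monomial_eval a M)"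
    by (simp add: distrib_right sum.distrib)
  also have "... = poly_eval p M + poly_eval p' M"
    using poly_eval_superset[OF f, of p] poly_eval_superset[OF f, of p'] by auto
  finally show ?thesis .
qed

lemma poly_eval_scale_coeff:
  assumes "p \<in> polys"
  shows "poly_eval (\<lambda>a. c * p a) M = c * poly_eval p M"
proof -
  let ?A = "{a. p a \<noteq> 0}"
  have f: "finite ?A" using assms by (simp add: polys_def)
  have "poly_eval (\<lambda>a. c * p a) M = (\<Sum>a\<in>?A. (c * p a) * monomial_eval a M)"
    by (rule poly_eval_superset[OF f]) auto
  also have "... = c * poly_eval p M"
    unfolding poly_eval_def sum_distrib_left by (simp add: mult.assoc)
  finally show ?thesis .
qed

lemma poly_eval_zero: "poly_eval (\<lambda>a. 0) M = 0"
  by (simp add: poly_eval_def)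

lemma homog_add: "p \<in> homog_polys d \<Longrightarrow> p' \<in> homog_polys d \<Longrightarrow> (\<lambda>a. p a + p' a) \<in> homog_polys d"
proof -
  assume p: "p \<in> homog_polys d" and p': "p' \<in> homog_polys d"
  have "{a. p a + p' a \<noteq> 0} \<subseteq> {a. p a \<noteq> 0} \<union> {a. p' a \<noteq> 0}" by auto
  then have "finite {a. p a + p' a \<noteq> 0}" using p p' by (auto simp: homog_polys_def polys_def intro: finite_subset)
  moreover have "total_degree a = d" if "p a + p' a \<noteq> 0" for a
  proof -
    have "p a \<noteq> 0 \<or> p' a \<noteq> 0" using that by auto
    then show ?thesis using p p' by (auto simp: homog_polys_def)
  qed
  ultimately show ?thesis by (auto simp: homog_polys_def polys_def)
qed

lemma homog_scale: "p \<in> homog_polys d \<Longrightarrow> (\<lambda>a. c * p a) \<in> homog_polys d"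
proof -
  assume p: "p \<in> homog_polys d"
  have "{a. c * p a \<noteq> 0} \<subseteq> {a. p a \<noteq> 0}" by auto
  then have "finite {a. c * p a \<noteq> 0}" using p by (auto simp: homog_polys_def polys_def intro: finite_subset)
  then show ?thesis using p by (auto simp: homog_polys_def polys_def)
qed

lemma homog_zero: "(\<lambda>a. 0) \<in> homog_polys d"
  by (simp add: homog_polys_def polys_def)

lemma homog_polys: "p \<in> homog_polys d \<Longrightarrow> p \<in> polys"
  by (simp add: homog_polys_def)

definition f1 :: "(expo \<Rightarrow> complex) \<Rightarrow> mat3 \<Rightarrow> complex" where
  "f1 p = (\<lambda>M. if M \<in> cone_O3 then poly_eval p M else 0)"

lemma coord_ring_part_f1: "coord_ring_part d = f1 ` homog_polys d"
  unfolding coord_ring_part_def f1_def ..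

lemma V_subspace: "VM.subspace (coord_ring_part d)"
  unfolding coord_ring_part_f1
proof (rule VM.subspaceI)
  show "0 \<in> f1 ` homog_polys d"
    by (rule image_eqI[of _ _ "\<lambda>a. 0"]) (auto simp: f1_def poly_eval_zero homog_zero fun_eq_iff)
next
  fix x y assume "x \<in> f1 ` homog_polys d" "y \<in> f1 ` homog_polys d"
  then obtain p p' where p: "p \<in> homog_polys d" "x = f1 p" and p': "p' \<in> homog_polys d" "y = f1 p'" by blast
  show "x + y \<in> f1 ` homog_polys d"
    by (rule image_eqI[of _ _ "\<lambda>a. p a + p' a"])
      (use p p' in \<open>auto simp: f1_def fun_eq_iff poly_eval_add homog_polys homog_add\<close>)
next
  fix c x assume "x \<in> f1 ` homog_polys d"
  then obtain p where p: "p \<in> homog_polys d" "x = f1 p" by blast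
  show "(\<lambda>xa. c * x xa) \<in> f1 ` homog_polys d"
    by (rule image_eqI[of _ _ "\<lambda>a. c * p a"])
      (use p in \<open>auto simp: f1_def fun_eq_iff poly_eval_scale_coeff homog_polys homog_scale\<close>)
qed

definition W :: "nat \<Rightarrow> (q4 \<Rightarrow> complex) set" where
  "W d = (\<lambda>p q. poly_eval p (Rm q)) ` homog_polys d"

definition Ed :: "nat \<Rightarrow> (q4 \<Rightarrow> complex) set" where
  "Ed d = {(\<lambda>q. monomial_eval a (Rm q)) | a. total_degree a = d}"

definition Lm :: "(mat3 \<Rightarrow> complex) \<Rightarrow> q4 \<Rightarrow> complex" where
  "Lm F = (\<lambda>q. F (Rm q))"

lemma Lm_linear: "Vector_Spaces.linear (\<lambda>(c::complex) (f::mat3 \<Rightarrow> complex) x. c * f x) (\<lambda>(c::complex) (f::q4 \<Rightarrow> complex) x. c * f x) Lm"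
  unfolding Vector_Spaces.linear_iff by (auto simp: vs_fun Lm_def)

lemma Lm_f1: "Lm (f1 p) = (\<lambda>q. poly_eval p (Rm q))"
  by (simp add: Lm_def f1_def R_in_cone)

lemma Lm_image: "Lm ` coord_ring_part d = W d"
  unfolding coord_ring_part_f1 W_def image_image Lm_f1 ..

lemma Lm_inj: "inj_on Lm (VM.span (coord_ring_part d))"
proof -
  have sp: "VM.span (coord_ring_part d) = coord_ring_part d"
    using V_subspace VM.span_eq_iff by blast
  show ?thesis unfolding sp
  proof (rule inj_onI)
    fix x y assume "x \<in> coord_ring_part d" "y \<in> coord_ring_part d" and eq: "Lm x = Lm y"
    then obtain p p' where p: "p \<in> homog_polys d" "x = f1 p" and p': "p' \<in> homog_polys d" "y = f1 p'"
      unfolding coord_ring_part_f1 by blast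
    define r where "r = (\<lambda>a. p a + (-1) * p' a)"
    have r: "r \<in> homog_polys d" unfolding r_def by (intro homog_add homog_scale p p')
    have ev: "poly_eval r M = poly_eval p M - poly_eval p' M" for M
    proof -
      have "poly_eval r M = poly_eval p M + poly_eval (\<lambda>a. (-1) * p' a) M" unfolding r_def
        by (rule poly_eval_add[OF homog_polys[OF p(1)] homog_polys[OF homog_scale[OF p'(1)]]])
      also have "... = poly_eval p M - poly_eval p' M"
        using poly_eval_scale_coeff[OF homog_polys[OF p'(1)], of "-1"] by simp
      finally show ?thesis .
    qed
    have "poly_eval r (Rm q) = 0" for q
    proof -
      have "(\<lambda>q. poly_eval p (Rm q)) q = (\<lambda>q. poly_eval p' (Rm q)) q"
        using eq unfolding p p' Lm_f1 by (rule arg_cong)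
      then show ?thesis unfolding ev by simp
    qed
    then have "\<forall>M\<in>cone_O3. poly_eval r M = 0" by (rule vanish_from_R[OF r])
    then show "x = y" unfolding p p' f1_def by (auto simp: fun_eq_iff ev)
  qed
qed

lemma hf_W: "hilbert_function d = VQ.dim (W d)"
proof -
  have "hilbert_function d = VM.dim (coord_ring_part d)" unfolding hilbert_function_def ..
  also have "... = VQ.dim (Lm ` coord_ring_part d)"
    by (rule dim_image_eq_gen[OF Lm_linear Lm_inj, symmetric])
  finally show ?thesis unfolding Lm_image .
qed

lemma W_subspace: "VQ.subspace (W d)"
  unfolding W_def
proof (rule VQ.subspaceI)
  show "0 \<in> (\<lambda>p q. poly_eval p (Rm q)) ` homog_polys d"
    by (rule image_eqI[of _ _ "\<lambda>a. 0"]) (auto simp: poly_eval_zero homog_zero fun_eq_iff)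
next
  fix x y assume "x \<in> (\<lambda>p q. poly_eval p (Rm q)) ` homog_polys d" "y \<in> (\<lambda>p q. poly_eval p (Rm q)) ` homog_polys d"
  then obtain p p' where p: "p \<in> homog_polys d" "x = (\<lambda>q. poly_eval p (Rm q))"
    and p': "p' \<in> homog_polys d" "y = (\<lambda>q. poly_eval p' (Rm q))" by blast
  show "x + y \<in> (\<lambda>p q. poly_eval p (Rm q)) ` homog_polys d"
    by (rule image_eqI[of _ _ "\<lambda>a. p a + p' a"])
      (use p p' in \<open>auto simp: fun_eq_iff poly_eval_add homog_polys homog_add\<close>)
next
  fix c x assume "x \<in> (\<lambda>p q. poly_eval p (Rm q)) ` homog_polys d"
  then obtain p where p: "p \<in> homog_polys d" "x = (\<lambda>q. poly_eval p (Rm q))" by blast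
  show "(\<lambda>xa. c * x xa) \<in> (\<lambda>p q. poly_eval p (Rm q)) ` homog_polys d"
    by (rule image_eqI[of _ _ "\<lambda>a. c * p a"])
      (use p in \<open>auto simp: fun_eq_iff poly_eval_scale_coeff homog_polys homog_scale\<close>)
qed

lemma Ed_W: "Ed d \<subseteq> W d"
proof
  fix f assume "f \<in> Ed d"
  then obtain a where a: "total_degree a = d" "f = (\<lambda>q. monomial_eval a (Rm q))" unfolding Ed_def by blast
  let ?p = "\<lambda>b. if b = a then (1::complex) else 0"
  have "?p \<in> homog_polys d" using a by (auto simp: homog_polys_def polys_def)
  moreover have "poly_eval ?p M = monomial_eval a M" for M
  proof -
    have "{b. ?p b \<noteq> 0} = {a}" by auto
    then show ?thesis unfolding poly_eval_def by simp
  qed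
  ultimately show "f \<in> W d" unfolding W_def a by (auto intro!: image_eqI[of _ _ ?p])
qed

lemma W_Ed: "W d \<subseteq> VQ.span (Ed d)"
proof
  fix f assume "f \<in> W d"
  then obtain p where p: "p \<in> homog_polys d" "f = (\<lambda>q. poly_eval p (Rm q))" unfolding W_def by blast
  have "f = (\<Sum>a\<in>{a. p a \<noteq> 0}. (\<lambda>q. p a * monomial_eval a (Rm q)))"
    unfolding p by (simp add: fun_eq_iff sum_fun_app poly_eval_def)
  also have "... \<in> VQ.span (Ed d)"
  proof (rule VQ.span_sum)
    fix a assume "a \<in> {a. p a \<noteq> 0}"
    then have "total_degree a = d" using p by (auto simp: homog_polys_def)
    then have "(\<lambda>q. monomial_eval a (Rm q)) \<in> Ed d" unfolding Ed_def by blast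
    then have "(\<lambda>x. p a * (\<lambda>q. monomial_eval a (Rm q)) x) \<in> VQ.span (Ed d)"
      by (intro VQ.span_scale VQ.span_base)
    then show "(\<lambda>q. p a * monomial_eval a (Rm q)) \<in> VQ.span (Ed d)" by simp
  qed
  finally show "f \<in> VQ.span (Ed d)" .
qed

lemma hf_Ed: "hilbert_function d = VQ.dim (Ed d)"
proof -
  have "VQ.span (W d) = VQ.span (Ed d)"
    using W_subspace Ed_W W_Ed VQ.span_eq VQ.span_superset by (metis VQ.span_eq_iff)
  then show ?thesis unfolding hf_W by (rule VQ.span_eq_dim)
qed

section \<open>Monomials in the quaternion variables\<close>

definition qmon :: "nat list \<Rightarrow> q4 \<Rightarrow> complex" where
  "qmon e q = (case q of (a,b,c,d) \<Rightarrow> a^(e!0) * b^(e!1) * c^(e!2) * d^(e!3))"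

definition Exs :: "nat \<Rightarrow> nat list set" where
  "Exs k = {e. length e = 4 \<and> sum_list e = k}"

definition Qm :: "nat \<Rightarrow> (q4 \<Rightarrow> complex) set" where
  "Qm k = qmon ` Exs k"

lemma card_Ex: "card (Exs k) = (k + 3) choose 3"
proof -
  have "card (Exs k) = (k + 4 - 1) choose k" unfolding Exs_def by (rule card_length_sum_list)
  also have "... = (k + 3) choose k" by (simp add: add.commute)
  also have "... = (k + 3) choose (k + 3 - k)" by (rule binomial_symmetric) simp
  also have "... = (k + 3) choose 3" by simp
  finally show ?thesis .
qed

lemma finite_Ex: "finite (Exs k)"
proof (rule ccontr)
  assume "infinite (Exs k)"
  then have "card (Exs k) = 0" by simp
  then show False unfolding card_Ex by simp
qed

lemma len4: "length e = 4 \<Longrightarrow> e = [e!0, e!1, e!2, e!3]"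
  by (rule nth_equalityI) (auto dest!: less4_cases)

lemma Ex_elim:
  assumes "e \<in> Exs k"
  obtains x0 x1 x2 x3 where "e = [x0,x1,x2,x3]" "x0 + x1 + x2 + x3 = k"
proof -
  have "length e = 4" "sum_list e = k" using assms by (auto simp: Exs_def)
  have "e = [e!0, e!1, e!2, e!3]" using \<open>length e = 4\<close> by (rule len4)
  moreover have "e!0 + e!1 + e!2 + e!3 = k" using \<open>sum_list e = k\<close> calculation
    by (metis add.assoc add.right_neutral sum_list.Cons sum_list.Nil)
  ultimately show ?thesis using that by blast
qed

definition kap :: "nat \<Rightarrow> nat list \<Rightarrow> nat" where
  "kap B e = e!0 + B * (e!1 + B * (e!2 + B * e!3))"

lemma qmon_curve: "qmon e (t, t^B, t^(B*B), t^(B*B*B)) = t ^ kap B e"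
  unfolding qmon_def kap_def
  by (simp add: power_add power_mult[symmetric] algebra_simps)

lemma horner_inj:
  fixes B x y x' y' :: nat
  assumes "x < B" "x' < B" "x + B*y = x' + B*y'"
  shows "x = x' \<and> y = y'"
proof -
  have "x = (x + B*y) mod B" using assms(1) by simp
  also have "... = (x' + B*y') mod B" using assms(3) by simp
  also have "... = x'" using assms(2) by simp
  finally have xx: "x = x'" .
  then have "B*y = B*y'" using assms(3) by simp
  then show ?thesis using xx assms(1) by simp
qed

lemma kap_inj: "inj_on (kap (Suc k)) (Exs k)"
proof (rule inj_onI)
  fix e e' assume e: "e \<in> Exs k" and e': "e' \<in> Exs k" and eq: "kap (Suc k) e = kap (Suc k) e'"
  obtain x0 x1 x2 x3 where ex: "e = [x0,x1,x2,x3]" "x0 + x1 + x2 + x3 = k" using Ex_elim[OF e] by blast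
  obtain y0 y1 y2 y3 where ey: "e' = [y0,y1,y2,y3]" "y0 + y1 + y2 + y3 = k" using Ex_elim[OF e'] by blast
  have b: "x0 < Suc k" "x1 < Suc k" "x2 < Suc k" "x3 < Suc k" "y0 < Suc k" "y1 < Suc k" "y2 < Suc k" "y3 < Suc k"
    using ex(2) ey(2) by auto
  have "x0 + Suc k * (x1 + Suc k * (x2 + Suc k * x3)) = y0 + Suc k * (y1 + Suc k * (y2 + Suc k * y3))"
    using eq by (simp add: kap_def ex ey)
  then have 0: "x0 = y0" and r0: "x1 + Suc k * (x2 + Suc k * x3) = y1 + Suc k * (y2 + Suc k * y3)"
    using horner_inj[OF b(1) b(5)] by blast+
  then have 1: "x1 = y1" and r1: "x2 + Suc k * x3 = y2 + Suc k * y3"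
    using horner_inj[OF b(2) b(6)] by blast+
  then have 2: "x2 = y2" and 3: "x3 = y3"
    using horner_inj[OF b(3) b(7)] by blast+
  show "e = e'" using 0 1 2 3 ex ey by simp
qed

lemma poly_indep:
  fixes c :: "'a \<Rightarrow> complex"
  assumes S: "finite S" and inj: "inj_on kp S" and z: "\<And>t::complex. (\<Sum>e\<in>S. c e * t ^ kp e) = 0"
    and e0: "e0 \<in> S"
  shows "c e0 = 0"
proof -
  define P where "P = (\<Sum>e\<in>S. monom (c e) (kp e))"
  have "poly P t = 0" for t unfolding P_def poly_sum poly_monom using z by simp
  then have "P = 0" using poly_all_0_iff_0 by blast
  then have "0 = coeff P (kp e0)" by simp
  also have "... = (\<Sum>e\<in>S. if e = e0 then c e else 0)"
    unfolding P_def coeff_sum coeff_monom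
    using inj e0 by (intro sum.cong) (auto dest: inj_onD)
  also have "... = c e0" using S e0 by simp
  finally show ?thesis by simp
qed

lemma qmon_inj: "inj_on qmon (Exs k)"
proof (rule inj_onI)
  fix e e' assume e: "e \<in> Exs k" and e': "e' \<in> Exs k" and eq: "qmon e = qmon e'"
  have "qmon e ((2::complex), 2^Suc k, 2^(Suc k*Suc k), 2^(Suc k*Suc k*Suc k))
      = qmon e' (2, 2^Suc k, 2^(Suc k*Suc k), 2^(Suc k*Suc k*Suc k))" by (simp only: eq)
  then have "(2::complex) ^ kap (Suc k) e = 2 ^ kap (Suc k) e'" unfolding qmon_curve .
  then have "of_nat (2 ^ kap (Suc k) e) = (of_nat (2 ^ kap (Suc k) e') :: complex)" by simp
  then have "(2::nat) ^ kap (Suc k) e = 2 ^ kap (Suc k) e'" using of_nat_eq_iff by blast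
  then have "kap (Suc k) e = kap (Suc k) e'" by simp
  then show "e = e'" using kap_inj e e' by (blast dest: inj_onD)
qed

lemma Qm_indep: "VQ.independent (Qm k)"
proof -
  have fin: "finite (Qm k)" unfolding Qm_def using finite_Ex by simp
  have "\<not> (\<exists>u. (\<exists>v\<in>Qm k. u v \<noteq> 0) \<and> (\<Sum>v\<in>Qm k. (\<lambda>x. u v * v x)) = 0)"
  proof
    assume "\<exists>u. (\<exists>v\<in>Qm k. u v \<noteq> 0) \<and> (\<Sum>v\<in>Qm k. (\<lambda>x. u v * v x)) = 0"
    then obtain c v where v: "v \<in> Qm k" "c v \<noteq> 0" and z: "(\<Sum>v\<in>Qm k. (\<lambda>x. c v * v x)) = 0" by blast
    obtain e0 where e0: "e0 \<in> Exs k" "v = qmon e0" using v unfolding Qm_def by blast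
    have "(\<Sum>e\<in>Exs k. c (qmon e) * t ^ kap (Suc k) e) = 0" for t
    proof -
      have "(\<Sum>v\<in>Qm k. (\<lambda>x. c v * v x)) (t, t^Suc k, t^(Suc k*Suc k), t^(Suc k*Suc k*Suc k)) = 0"
        using z by simp
      then show ?thesis unfolding Qm_def sum_fun_app sum.reindex[OF qmon_inj] comp_def qmon_curve .
    qed
    from poly_indep[OF finite_Ex kap_inj this e0(1)] show False using e0 v by simp
  qed
  then show ?thesis using VQ.dependent_finite[OF fin] by simp
qed

lemma dim_Qm: "VQ.dim (Qm k) = (k + 3) choose 3"
proof -
  have "VQ.dim (Qm k) = card (Qm k)" by (rule VQ.dim_eq_card_independent[OF Qm_indep])
  also have "... = card (Exs k)" unfolding Qm_def by (rule card_image[OF qmon_inj])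
  finally show ?thesis by (simp add: card_Ex)
qed

lemma sp_add: "f \<in> VQ.span S \<Longrightarrow> g \<in> VQ.span S \<Longrightarrow> (\<lambda>q. f q + g q) \<in> VQ.span S"
  using VQ.span_add[of f S g] by (simp add: plus_fun_def)

lemma sp_diff: "f \<in> VQ.span S \<Longrightarrow> g \<in> VQ.span S \<Longrightarrow> (\<lambda>q. f q - g q) \<in> VQ.span S"
  using VQ.span_diff[of f S g] by (simp add: fun_diff_def)

lemma sp_scale: "f \<in> VQ.span S \<Longrightarrow> (\<lambda>q. c * f q) \<in> VQ.span S"
  using VQ.span_scale[of f S c] by simp

lemma sp_zero: "(\<lambda>q. 0) \<in> VQ.span S"
  using VQ.span_zero[of S] by (simp add: zero_fun_def)

lemma span_mult1:
  assumes gen: "\<And>g. g \<in> B \<Longrightarrow> (\<lambda>q. f q * g q) \<in> VQ.span C"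
    and g: "g \<in> VQ.span B"
  shows "(\<lambda>q. f q * g q) \<in> VQ.span C"
proof -
  have "g \<in> {g. (\<lambda>q. f q * g q) \<in> VQ.span C}"
    using g
  proof (rule VQ.span_subspace_induct)
    show "VQ.subspace {g. (\<lambda>q. f q * g q) \<in> VQ.span C}"
    proof (rule VQ.subspaceI)
      show "0 \<in> {g. (\<lambda>q. f q * g q) \<in> VQ.span C}" using sp_zero by simp
    next
      fix x y assume "x \<in> {g. (\<lambda>q. f q * g q) \<in> VQ.span C}" "y \<in> {g. (\<lambda>q. f q * g q) \<in> VQ.span C}"
      then have "(\<lambda>q. f q * x q + f q * y q) \<in> VQ.span C" by (simp add: sp_add)
      then show "x + y \<in> {g. (\<lambda>q. f q * g q) \<in> VQ.span C}" by (simp add: distrib_left)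
    next
      fix c x assume "x \<in> {g. (\<lambda>q. f q * g q) \<in> VQ.span C}"
      then have "(\<lambda>q. c * (f q * x q)) \<in> VQ.span C" by (simp add: sp_scale)
      then show "(\<lambda>xa. c * x xa) \<in> {g. (\<lambda>q. f q * g q) \<in> VQ.span C}" by (simp add: algebra_simps)
    qed
  qed (use gen in auto)
  then show ?thesis by simp
qed

lemma span_mult:
  assumes gen: "\<And>f g. f \<in> A \<Longrightarrow> g \<in> B \<Longrightarrow> (\<lambda>q. f q * g q) \<in> VQ.span C"
    and f: "f \<in> VQ.span A" and g: "g \<in> VQ.span B"
  shows "(\<lambda>q. f q * g q) \<in> VQ.span C"
proof -
  have "(\<lambda>q. g q * f q) \<in> VQ.span C"
  proof (rule span_mult1[OF _ f])
    fix f' assume f': "f' \<in> A"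
    have "(\<lambda>q. f' q * g q) \<in> VQ.span C" by (rule span_mult1[OF gen[OF f'] g])
    then show "(\<lambda>q. g q * f' q) \<in> VQ.span C" by (simp add: mult.commute)
  qed
  then show ?thesis by (simp add: mult.commute)
qed

section \<open>Products of monomials\<close>

definition ladd :: "nat list \<Rightarrow> nat list \<Rightarrow> nat list" where
  "ladd e e' = [e!0+e'!0, e!1+e'!1, e!2+e'!2, e!3+e'!3]"

lemma ladd_Exs: "e \<in> Exs m \<Longrightarrow> e' \<in> Exs n \<Longrightarrow> ladd e e' \<in> Exs (m+n)"
  by (elim Ex_elim) (simp add: ladd_def Exs_def)

lemma qmon_ladd: "qmon (ladd e e') q = qmon e q * qmon e' q"
  by (cases q) (simp add: qmon_def ladd_def power_add algebra_simps)

lemma qmon_in_Qm: "e \<in> Exs k \<Longrightarrow> qmon e \<in> VQ.span (Qm k)"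
  by (rule VQ.span_base) (simp add: Qm_def)

lemma Qm_mult: "f \<in> VQ.span (Qm m) \<Longrightarrow> g \<in> VQ.span (Qm n) \<Longrightarrow> (\<lambda>q. f q * g q) \<in> VQ.span (Qm (m+n))"
proof (rule span_mult)
  fix f g assume "f \<in> Qm m" "g \<in> Qm n"
  then obtain e e' where "e \<in> Exs m" "f = qmon e" "e' \<in> Exs n" "g = qmon e'" unfolding Qm_def by blast
  then show "(\<lambda>q. f q * g q) \<in> VQ.span (Qm (m + n))"
    using qmon_in_Qm[OF ladd_Exs] by (simp add: qmon_ladd[symmetric])
qed

lemma mono_mult: "monomial_eval a M * monomial_eval b M = monomial_eval (\<lambda>i j. a i j + b i j) M"
  by (simp add: monomial_eval_def power_add prod.distrib)

lemma td_add: "total_degree (\<lambda>i j. a i j + b i j) = total_degree a + total_degree b"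
  by (simp add: total_degree_def sum.distrib)

lemma PP_mult: "f \<in> VQ.span (Ed m) \<Longrightarrow> g \<in> VQ.span (Ed n) \<Longrightarrow> (\<lambda>q. f q * g q) \<in> VQ.span (Ed (m+n))"
proof (rule span_mult)
  fix f g assume "f \<in> Ed m" "g \<in> Ed n"
  then obtain a b where "total_degree a = m" "f = (\<lambda>q. monomial_eval a (Rm q))"
    "total_degree b = n" "g = (\<lambda>q. monomial_eval b (Rm q))" unfolding Ed_def by blast
  then show "(\<lambda>q. f q * g q) \<in> VQ.span (Ed (m + n))"
    by (intro VQ.span_base) (auto simp: Ed_def mono_mult td_add)
qed

definition dlt :: "3 \<Rightarrow> 3 \<Rightarrow> expo" where
  "dlt i j = (\<lambda>i' j'. if i' = i \<and> j' = j then 1 else 0)"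

lemma mono_dlt: "monomial_eval (dlt i j) M = M$i$j"
proof -
  have "(\<Prod>j'\<in>UNIV. M$i'$j' ^ dlt i j i' j') = (if i' = i then M$i$j else 1)" for i'
    by (cases "i' = i") (simp_all add: dlt_def if_distrib[of "\<lambda>n. x ^ n" for x] cong: if_cong)
  then show ?thesis unfolding monomial_eval_def by simp
qed

lemma td_dlt: "total_degree (dlt i j) = 1"
proof -
  have "(\<Sum>j'\<in>UNIV. dlt i j i' j') = (if i' = i then 1 else 0)" for i'
    by (cases "i' = i") (simp_all add: dlt_def)
  then show ?thesis unfolding total_degree_def by simp
qed

lemma Rent_Ed1: "(\<lambda>q. Rent q i j) \<in> Ed 1"
proof -
  have "(\<lambda>q. Rent q i j) = (\<lambda>q. monomial_eval (dlt i j) (Rm q))" by (simp add: mono_dlt)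
  then show ?thesis using td_dlt[of i j] unfolding Ed_def by blast
qed

lemma Rent_PP1: "(\<lambda>q. Rent q i j) \<in> VQ.span (Ed 1)"
  by (rule VQ.span_base[OF Rent_Ed1])

lemma Rent_Qm2_11: "(\<lambda>q. Rent q 1 1) \<in> VQ.span (Qm 2)"
proof -
  have "(\<lambda>q. Rent q 1 1) = (\<lambda>q. qmon [2,0,0,0] q + qmon [0,2,0,0] q - qmon [0,0,2,0] q - qmon [0,0,0,2] q)"
  proof
    fix q :: q4 obtain a b c d where q: "q = (a,b,c,d)" by (cases q) auto
    show "Rent q 1 1 = qmon [2,0,0,0] q + qmon [0,2,0,0] q - qmon [0,0,2,0] q - qmon [0,0,0,2] q" unfolding q by (simp add: qmon_def power2_eq_square algebra_simps)
  qed
  also have "... \<in> VQ.span (Qm 2)" by (intro sp_add sp_diff sp_scale qmon_in_Qm) (simp_all add: Exs_def)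
  finally show ?thesis .
qed

lemma Rent_Qm2_12: "(\<lambda>q. Rent q 1 2) \<in> VQ.span (Qm 2)"
proof -
  have "(\<lambda>q. Rent q 1 2) = (\<lambda>q. 2 * qmon [0,1,1,0] q - 2 * qmon [1,0,0,1] q)"
  proof
    fix q :: q4 obtain a b c d where q: "q = (a,b,c,d)" by (cases q) auto
    show "Rent q 1 2 = 2 * qmon [0,1,1,0] q - 2 * qmon [1,0,0,1] q" unfolding q by (simp add: qmon_def power2_eq_square algebra_simps)
  qed
  also have "... \<in> VQ.span (Qm 2)" by (intro sp_add sp_diff sp_scale qmon_in_Qm) (simp_all add: Exs_def)
  finally show ?thesis .
qed

lemma Rent_Qm2_13: "(\<lambda>q. Rent q 1 3) \<in> VQ.span (Qm 2)"
proof -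
  have "(\<lambda>q. Rent q 1 3) = (\<lambda>q. 2 * qmon [0,1,0,1] q + 2 * qmon [1,0,1,0] q)"
  proof
    fix q :: q4 obtain a b c d where q: "q = (a,b,c,d)" by (cases q) auto
    show "Rent q 1 3 = 2 * qmon [0,1,0,1] q + 2 * qmon [1,0,1,0] q" unfolding q by (simp add: qmon_def power2_eq_square algebra_simps)
  qed
  also have "... \<in> VQ.span (Qm 2)" by (intro sp_add sp_diff sp_scale qmon_in_Qm) (simp_all add: Exs_def)
  finally show ?thesis .
qed

lemma Rent_Qm2_21: "(\<lambda>q. Rent q 2 1) \<in> VQ.span (Qm 2)"
proof -
  have "(\<lambda>q. Rent q 2 1) = (\<lambda>q. 2 * qmon [0,1,1,0] q + 2 * qmon [1,0,0,1] q)"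
  proof
    fix q :: q4 obtain a b c d where q: "q = (a,b,c,d)" by (cases q) auto
    show "Rent q 2 1 = 2 * qmon [0,1,1,0] q + 2 * qmon [1,0,0,1] q" unfolding q by (simp add: qmon_def power2_eq_square algebra_simps)
  qed
  also have "... \<in> VQ.span (Qm 2)" by (intro sp_add sp_diff sp_scale qmon_in_Qm) (simp_all add: Exs_def)
  finally show ?thesis .
qed

lemma Rent_Qm2_22: "(\<lambda>q. Rent q 2 2) \<in> VQ.span (Qm 2)"
proof -
  have "(\<lambda>q. Rent q 2 2) = (\<lambda>q. qmon [2,0,0,0] q - qmon [0,2,0,0] q + qmon [0,0,2,0] q - qmon [0,0,0,2] q)"
  proof
    fix q :: q4 obtain a b c d where q: "q = (a,b,c,d)" by (cases q) auto
    show "Rent q 2 2 = qmon [2,0,0,0] q - qmon [0,2,0,0] q + qmon [0,0,2,0] q - qmon [0,0,0,2] q" unfolding q by (simp add: qmon_def power2_eq_square algebra_simps)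
  qed
  also have "... \<in> VQ.span (Qm 2)" by (intro sp_add sp_diff sp_scale qmon_in_Qm) (simp_all add: Exs_def)
  finally show ?thesis .
qed

lemma Rent_Qm2_23: "(\<lambda>q. Rent q 2 3) \<in> VQ.span (Qm 2)"
proof -
  have "(\<lambda>q. Rent q 2 3) = (\<lambda>q. 2 * qmon [0,0,1,1] q - 2 * qmon [1,1,0,0] q)"
  proof
    fix q :: q4 obtain a b c d where q: "q = (a,b,c,d)" by (cases q) auto
    show "Rent q 2 3 = 2 * qmon [0,0,1,1] q - 2 * qmon [1,1,0,0] q" unfolding q by (simp add: qmon_def power2_eq_square algebra_simps)
  qed
  also have "... \<in> VQ.span (Qm 2)" by (intro sp_add sp_diff sp_scale qmon_in_Qm) (simp_all add: Exs_def)
  finally show ?thesis .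
qed

lemma Rent_Qm2_31: "(\<lambda>q. Rent q 3 1) \<in> VQ.span (Qm 2)"
proof -
  have "(\<lambda>q. Rent q 3 1) = (\<lambda>q. 2 * qmon [0,1,0,1] q - 2 * qmon [1,0,1,0] q)"
  proof
    fix q :: q4 obtain a b c d where q: "q = (a,b,c,d)" by (cases q) auto
    show "Rent q 3 1 = 2 * qmon [0,1,0,1] q - 2 * qmon [1,0,1,0] q" unfolding q by (simp add: qmon_def power2_eq_square algebra_simps)
  qed
  also have "... \<in> VQ.span (Qm 2)" by (intro sp_add sp_diff sp_scale qmon_in_Qm) (simp_all add: Exs_def)
  finally show ?thesis .
qed

lemma Rent_Qm2_32: "(\<lambda>q. Rent q 3 2) \<in> VQ.span (Qm 2)"
proof -
  have "(\<lambda>q. Rent q 3 2) = (\<lambda>q. 2 * qmon [0,0,1,1] q + 2 * qmon [1,1,0,0] q)"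
  proof
    fix q :: q4 obtain a b c d where q: "q = (a,b,c,d)" by (cases q) auto
    show "Rent q 3 2 = 2 * qmon [0,0,1,1] q + 2 * qmon [1,1,0,0] q" unfolding q by (simp add: qmon_def power2_eq_square algebra_simps)
  qed
  also have "... \<in> VQ.span (Qm 2)" by (intro sp_add sp_diff sp_scale qmon_in_Qm) (simp_all add: Exs_def)
  finally show ?thesis .
qed

lemma Rent_Qm2_33: "(\<lambda>q. Rent q 3 3) \<in> VQ.span (Qm 2)"
proof -
  have "(\<lambda>q. Rent q 3 3) = (\<lambda>q. qmon [2,0,0,0] q - qmon [0,2,0,0] q - qmon [0,0,2,0] q + qmon [0,0,0,2] q)"
  proof
    fix q :: q4 obtain a b c d where q: "q = (a,b,c,d)" by (cases q) auto
    show "Rent q 3 3 = qmon [2,0,0,0] q - qmon [0,2,0,0] q - qmon [0,0,2,0] q + qmon [0,0,0,2] q" unfolding q by (simp add: qmon_def power2_eq_square algebra_simps)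
  qed
  also have "... \<in> VQ.span (Qm 2)" by (intro sp_add sp_diff sp_scale qmon_in_Qm) (simp_all add: Exs_def)
  finally show ?thesis .
qed

lemma Rent_Qm2: "(\<lambda>q. Rent q i j) \<in> VQ.span (Qm 2)"
  using exhaust_3[of i] exhaust_3[of j]
  by (elim disjE) (simp_all add: Rent_Qm2_11 Rent_Qm2_12 Rent_Qm2_13 Rent_Qm2_21 Rent_Qm2_22
      Rent_Qm2_23 Rent_Qm2_31 Rent_Qm2_32 Rent_Qm2_33)

lemma Qm_pow: "f \<in> VQ.span (Qm k) \<Longrightarrow> (\<lambda>q. f q ^ n) \<in> VQ.span (Qm (n*k))"
proof (induction n)
  case 0
  have "qmon [0,0,0,0] \<in> VQ.span (Qm 0)" by (rule qmon_in_Qm) (simp add: Exs_def)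
  moreover have "qmon [0,0,0,0] = (\<lambda>q. 1)" by (auto simp: fun_eq_iff qmon_def)
  ultimately show ?case by simp
next
  case (Suc n)
  then have "(\<lambda>q. f q * f q ^ n) \<in> VQ.span (Qm (k + n*k))" by (intro Qm_mult) auto
  then show ?case by simp
qed

lemma Qm_prod:
  assumes "finite I" "\<And>i. i \<in> I \<Longrightarrow> f i \<in> VQ.span (Qm (k i))"
  shows "(\<lambda>q. \<Prod>i\<in>I. f i q) \<in> VQ.span (Qm (\<Sum>i\<in>I. k i))"
  using assms
proof (induction I rule: finite_induct)
  case empty
  have "qmon [0,0,0,0] \<in> VQ.span (Qm 0)" by (rule qmon_in_Qm) (simp add: Exs_def)
  moreover have "qmon [0,0,0,0] = (\<lambda>q. 1)" by (auto simp: fun_eq_iff qmon_def)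
  ultimately show ?case by simp
next
  case (insert x F)
  then have "(\<lambda>q. f x q * (\<Prod>i\<in>F. f i q)) \<in> VQ.span (Qm (k x + (\<Sum>i\<in>F. k i)))"
    by (intro Qm_mult) auto
  then show ?case using insert by simp
qed

lemma Ed_Qm: "Ed d \<subseteq> VQ.span (Qm (2*d))"
proof
  fix f assume "f \<in> Ed d"
  then obtain a where a: "total_degree a = d" "f = (\<lambda>q. monomial_eval a (Rm q))" unfolding Ed_def by blast
  have "(\<lambda>q. \<Prod>i\<in>UNIV. \<Prod>j\<in>UNIV. Rent q i j ^ a i j) \<in> VQ.span (Qm (\<Sum>i\<in>UNIV. \<Sum>j\<in>UNIV. a i j * 2))"
    by (intro Qm_prod Qm_pow Rent_Qm2) auto
  moreover have "(\<Sum>i\<in>UNIV. \<Sum>j\<in>UNIV. a i j * 2) = 2 * d"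
  proof -
    have "(\<Sum>i\<in>UNIV. \<Sum>j\<in>UNIV. a i j * 2) = (\<Sum>i\<in>UNIV. \<Sum>j\<in>UNIV. a i j) * 2"
      by (simp add: sum_distrib_right)
    then show ?thesis using a(1) unfolding total_degree_def by simp
  qed
  ultimately show "f \<in> VQ.span (Qm (2*d))" unfolding a monomial_eval_def by simp
qed

lemma U1_N: "Nq \<in> VQ.span (insert (\<lambda>q. Nq q ^ 1) (Ed 1))"
proof -
  have "(\<lambda>q. Nq q ^ 1) = Nq" by simp
  then show ?thesis by (metis VQ.span_base insertI1)
qed

lemma U1_Rent: "(\<lambda>q. Rent q i j) \<in> VQ.span (insert (\<lambda>q. Nq q ^ 1) (Ed 1))"
  by (rule VQ.span_base, rule insertI2, rule Rent_Ed1)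

lemma PP_mult11: "f \<in> VQ.span (Ed 1) \<Longrightarrow> g \<in> VQ.span (Ed 1) \<Longrightarrow> (\<lambda>q. f q * g q) \<in> VQ.span (Ed 2)"
  using PP_mult[of f 1 g 1, unfolded one_add_one] .

lemma NR_11: "(\<lambda>q. Nq q * Rent q 1 1) \<in> VQ.span (Ed 2)"
proof -
  have "(\<lambda>q. Nq q * Rent q 1 1) = (\<lambda>q. Rent q 2 2 * Rent q 3 3 - Rent q 2 3 * Rent q 3 2)"
  proof
    fix q :: q4 obtain a b c d where q: "q = (a,b,c,d)" by (cases q) auto
    show "Nq q * Rent q 1 1 = Rent q 2 2 * Rent q 3 3 - Rent q 2 3 * Rent q 3 2" unfolding q Nq_def by (simp; algebra?)
  qed
  also have "... \<in> VQ.span (Ed 2)" by (intro sp_diff PP_mult11 Rent_PP1)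
  finally show ?thesis .
qed

lemma NR_12: "(\<lambda>q. Nq q * Rent q 1 2) \<in> VQ.span (Ed 2)"
proof -
  have "(\<lambda>q. Nq q * Rent q 1 2) = (\<lambda>q. Rent q 2 3 * Rent q 3 1 - Rent q 2 1 * Rent q 3 3)"
  proof
    fix q :: q4 obtain a b c d where q: "q = (a,b,c,d)" by (cases q) auto
    show "Nq q * Rent q 1 2 = Rent q 2 3 * Rent q 3 1 - Rent q 2 1 * Rent q 3 3" unfolding q Nq_def by (simp; algebra?)
  qed
  also have "... \<in> VQ.span (Ed 2)" by (intro sp_diff PP_mult11 Rent_PP1)
  finally show ?thesis .
qed

lemma NR_13: "(\<lambda>q. Nq q * Rent q 1 3) \<in> VQ.span (Ed 2)"
proof -
  have "(\<lambda>q. Nq q * Rent q 1 3) = (\<lambda>q. Rent q 2 1 * Rent q 3 2 - Rent q 2 2 * Rent q 3 1)"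
  proof
    fix q :: q4 obtain a b c d where q: "q = (a,b,c,d)" by (cases q) auto
    show "Nq q * Rent q 1 3 = Rent q 2 1 * Rent q 3 2 - Rent q 2 2 * Rent q 3 1" unfolding q Nq_def by (simp; algebra?)
  qed
  also have "... \<in> VQ.span (Ed 2)" by (intro sp_diff PP_mult11 Rent_PP1)
  finally show ?thesis .
qed

lemma NR_21: "(\<lambda>q. Nq q * Rent q 2 1) \<in> VQ.span (Ed 2)"
proof -
  have "(\<lambda>q. Nq q * Rent q 2 1) = (\<lambda>q. Rent q 3 2 * Rent q 1 3 - Rent q 3 3 * Rent q 1 2)"
  proof
    fix q :: q4 obtain a b c d where q: "q = (a,b,c,d)" by (cases q) auto
    show "Nq q * Rent q 2 1 = Rent q 3 2 * Rent q 1 3 - Rent q 3 3 * Rent q 1 2" unfolding q Nq_def by (simp; algebra?)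
  qed
  also have "... \<in> VQ.span (Ed 2)" by (intro sp_diff PP_mult11 Rent_PP1)
  finally show ?thesis .
qed

lemma NR_22: "(\<lambda>q. Nq q * Rent q 2 2) \<in> VQ.span (Ed 2)"
proof -
  have "(\<lambda>q. Nq q * Rent q 2 2) = (\<lambda>q. Rent q 3 3 * Rent q 1 1 - Rent q 3 1 * Rent q 1 3)"
  proof
    fix q :: q4 obtain a b c d where q: "q = (a,b,c,d)" by (cases q) auto
    show "Nq q * Rent q 2 2 = Rent q 3 3 * Rent q 1 1 - Rent q 3 1 * Rent q 1 3" unfolding q Nq_def by (simp; algebra?)
  qed
  also have "... \<in> VQ.span (Ed 2)" by (intro sp_diff PP_mult11 Rent_PP1)
  finally show ?thesis .
qed

lemma NR_23: "(\<lambda>q. Nq q * Rent q 2 3) \<in> VQ.span (Ed 2)"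
proof -
  have "(\<lambda>q. Nq q * Rent q 2 3) = (\<lambda>q. Rent q 3 1 * Rent q 1 2 - Rent q 3 2 * Rent q 1 1)"
  proof
    fix q :: q4 obtain a b c d where q: "q = (a,b,c,d)" by (cases q) auto
    show "Nq q * Rent q 2 3 = Rent q 3 1 * Rent q 1 2 - Rent q 3 2 * Rent q 1 1" unfolding q Nq_def by (simp; algebra?)
  qed
  also have "... \<in> VQ.span (Ed 2)" by (intro sp_diff PP_mult11 Rent_PP1)
  finally show ?thesis .
qed

lemma NR_31: "(\<lambda>q. Nq q * Rent q 3 1) \<in> VQ.span (Ed 2)"
proof -
  have "(\<lambda>q. Nq q * Rent q 3 1) = (\<lambda>q. Rent q 1 2 * Rent q 2 3 - Rent q 1 3 * Rent q 2 2)"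
  proof
    fix q :: q4 obtain a b c d where q: "q = (a,b,c,d)" by (cases q) auto
    show "Nq q * Rent q 3 1 = Rent q 1 2 * Rent q 2 3 - Rent q 1 3 * Rent q 2 2" unfolding q Nq_def by (simp; algebra?)
  qed
  also have "... \<in> VQ.span (Ed 2)" by (intro sp_diff PP_mult11 Rent_PP1)
  finally show ?thesis .
qed

lemma NR_32: "(\<lambda>q. Nq q * Rent q 3 2) \<in> VQ.span (Ed 2)"
proof -
  have "(\<lambda>q. Nq q * Rent q 3 2) = (\<lambda>q. Rent q 1 3 * Rent q 2 1 - Rent q 1 1 * Rent q 2 3)"
  proof
    fix q :: q4 obtain a b c d where q: "q = (a,b,c,d)" by (cases q) auto
    show "Nq q * Rent q 3 2 = Rent q 1 3 * Rent q 2 1 - Rent q 1 1 * Rent q 2 3" unfolding q Nq_def by (simp; algebra?)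
  qed
  also have "... \<in> VQ.span (Ed 2)" by (intro sp_diff PP_mult11 Rent_PP1)
  finally show ?thesis .
qed

lemma NR_33: "(\<lambda>q. Nq q * Rent q 3 3) \<in> VQ.span (Ed 2)"
proof -
  have "(\<lambda>q. Nq q * Rent q 3 3) = (\<lambda>q. Rent q 1 1 * Rent q 2 2 - Rent q 1 2 * Rent q 2 1)"
  proof
    fix q :: q4 obtain a b c d where q: "q = (a,b,c,d)" by (cases q) auto
    show "Nq q * Rent q 3 3 = Rent q 1 1 * Rent q 2 2 - Rent q 1 2 * Rent q 2 1" unfolding q Nq_def by (simp; algebra?)
  qed
  also have "... \<in> VQ.span (Ed 2)" by (intro sp_diff PP_mult11 Rent_PP1)
  finally show ?thesis .
qed

lemma Q2_2000: "qmon [2,0,0,0] \<in> VQ.span (insert (\<lambda>q. Nq q ^ 1) (Ed 1))"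
proof -
  have "qmon [2,0,0,0] = (\<lambda>q. (1/4) * (Nq q + Rent q 1 1 + Rent q 2 2 + Rent q 3 3))"
  proof
    fix q :: q4 obtain a b c d where q: "q = (a,b,c,d)" by (cases q) auto
    show "qmon [2,0,0,0] q = (1/4) * (Nq q + Rent q 1 1 + Rent q 2 2 + Rent q 3 3)" unfolding q by (simp add: qmon_def Nq_def field_simps power2_eq_square)
  qed
  also have "... \<in> VQ.span (insert (\<lambda>q. Nq q ^ 1) (Ed 1))"
    by (intro sp_scale sp_add sp_diff U1_N U1_Rent)
  finally show ?thesis .
qed

lemma Q2_0200: "qmon [0,2,0,0] \<in> VQ.span (insert (\<lambda>q. Nq q ^ 1) (Ed 1))"
proof -
  have "qmon [0,2,0,0] = (\<lambda>q. (1/4) * (Nq q + Rent q 1 1 - Rent q 2 2 - Rent q 3 3))"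
  proof
    fix q :: q4 obtain a b c d where q: "q = (a,b,c,d)" by (cases q) auto
    show "qmon [0,2,0,0] q = (1/4) * (Nq q + Rent q 1 1 - Rent q 2 2 - Rent q 3 3)" unfolding q by (simp add: qmon_def Nq_def field_simps power2_eq_square)
  qed
  also have "... \<in> VQ.span (insert (\<lambda>q. Nq q ^ 1) (Ed 1))"
    by (intro sp_scale sp_add sp_diff U1_N U1_Rent)
  finally show ?thesis .
qed

lemma Q2_0020: "qmon [0,0,2,0] \<in> VQ.span (insert (\<lambda>q. Nq q ^ 1) (Ed 1))"
proof -
  have "qmon [0,0,2,0] = (\<lambda>q. (1/4) * (Nq q - Rent q 1 1 + Rent q 2 2 - Rent q 3 3))"
  proof
    fix q :: q4 obtain a b c d where q: "q = (a,b,c,d)" by (cases q) auto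
    show "qmon [0,0,2,0] q = (1/4) * (Nq q - Rent q 1 1 + Rent q 2 2 - Rent q 3 3)" unfolding q by (simp add: qmon_def Nq_def field_simps power2_eq_square)
  qed
  also have "... \<in> VQ.span (insert (\<lambda>q. Nq q ^ 1) (Ed 1))"
    by (intro sp_scale sp_add sp_diff U1_N U1_Rent)
  finally show ?thesis .
qed

lemma Q2_0002: "qmon [0,0,0,2] \<in> VQ.span (insert (\<lambda>q. Nq q ^ 1) (Ed 1))"
proof -
  have "qmon [0,0,0,2] = (\<lambda>q. (1/4) * (Nq q - Rent q 1 1 - Rent q 2 2 + Rent q 3 3))"
  proof
    fix q :: q4 obtain a b c d where q: "q = (a,b,c,d)" by (cases q) auto
    show "qmon [0,0,0,2] q = (1/4) * (Nq q - Rent q 1 1 - Rent q 2 2 + Rent q 3 3)" unfolding q by (simp add: qmon_def Nq_def field_simps power2_eq_square)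
  qed
  also have "... \<in> VQ.span (insert (\<lambda>q. Nq q ^ 1) (Ed 1))"
    by (intro sp_scale sp_add sp_diff U1_N U1_Rent)
  finally show ?thesis .
qed

lemma Q2_1100: "qmon [1,1,0,0] \<in> VQ.span (insert (\<lambda>q. Nq q ^ 1) (Ed 1))"
proof -
  have "qmon [1,1,0,0] = (\<lambda>q. (1/4) * (Rent q 3 2 - Rent q 2 3))"
  proof
    fix q :: q4 obtain a b c d where q: "q = (a,b,c,d)" by (cases q) auto
    show "qmon [1,1,0,0] q = (1/4) * (Rent q 3 2 - Rent q 2 3)" unfolding q by (simp add: qmon_def Nq_def field_simps power2_eq_square)
  qed
  also have "... \<in> VQ.span (insert (\<lambda>q. Nq q ^ 1) (Ed 1))"
    by (intro sp_scale sp_add sp_diff U1_N U1_Rent)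
  finally show ?thesis .
qed

lemma Q2_1010: "qmon [1,0,1,0] \<in> VQ.span (insert (\<lambda>q. Nq q ^ 1) (Ed 1))"
proof -
  have "qmon [1,0,1,0] = (\<lambda>q. (1/4) * (Rent q 1 3 - Rent q 3 1))"
  proof
    fix q :: q4 obtain a b c d where q: "q = (a,b,c,d)" by (cases q) auto
    show "qmon [1,0,1,0] q = (1/4) * (Rent q 1 3 - Rent q 3 1)" unfolding q by (simp add: qmon_def Nq_def field_simps power2_eq_square)
  qed
  also have "... \<in> VQ.span (insert (\<lambda>q. Nq q ^ 1) (Ed 1))"
    by (intro sp_scale sp_add sp_diff U1_N U1_Rent)
  finally show ?thesis .
qed

lemma Q2_1001: "qmon [1,0,0,1] \<in> VQ.span (insert (\<lambda>q. Nq q ^ 1) (Ed 1))"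
proof -
  have "qmon [1,0,0,1] = (\<lambda>q. (1/4) * (Rent q 2 1 - Rent q 1 2))"
  proof
    fix q :: q4 obtain a b c d where q: "q = (a,b,c,d)" by (cases q) auto
    show "qmon [1,0,0,1] q = (1/4) * (Rent q 2 1 - Rent q 1 2)" unfolding q by (simp add: qmon_def Nq_def field_simps power2_eq_square)
  qed
  also have "... \<in> VQ.span (insert (\<lambda>q. Nq q ^ 1) (Ed 1))"
    by (intro sp_scale sp_add sp_diff U1_N U1_Rent)
  finally show ?thesis .
qed

lemma Q2_0110: "qmon [0,1,1,0] \<in> VQ.span (insert (\<lambda>q. Nq q ^ 1) (Ed 1))"
proof -
  have "qmon [0,1,1,0] = (\<lambda>q. (1/4) * (Rent q 1 2 + Rent q 2 1))"
  proof
    fix q :: q4 obtain a b c d where q: "q = (a,b,c,d)" by (cases q) auto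
    show "qmon [0,1,1,0] q = (1/4) * (Rent q 1 2 + Rent q 2 1)" unfolding q by (simp add: qmon_def Nq_def field_simps power2_eq_square)
  qed
  also have "... \<in> VQ.span (insert (\<lambda>q. Nq q ^ 1) (Ed 1))"
    by (intro sp_scale sp_add sp_diff U1_N U1_Rent)
  finally show ?thesis .
qed

lemma Q2_0101: "qmon [0,1,0,1] \<in> VQ.span (insert (\<lambda>q. Nq q ^ 1) (Ed 1))"
proof -
  have "qmon [0,1,0,1] = (\<lambda>q. (1/4) * (Rent q 1 3 + Rent q 3 1))"
  proof
    fix q :: q4 obtain a b c d where q: "q = (a,b,c,d)" by (cases q) auto
    show "qmon [0,1,0,1] q = (1/4) * (Rent q 1 3 + Rent q 3 1)" unfolding q by (simp add: qmon_def Nq_def field_simps power2_eq_square)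
  qed
  also have "... \<in> VQ.span (insert (\<lambda>q. Nq q ^ 1) (Ed 1))"
    by (intro sp_scale sp_add sp_diff U1_N U1_Rent)
  finally show ?thesis .
qed

lemma Q2_0011: "qmon [0,0,1,1] \<in> VQ.span (insert (\<lambda>q. Nq q ^ 1) (Ed 1))"
proof -
  have "qmon [0,0,1,1] = (\<lambda>q. (1/4) * (Rent q 2 3 + Rent q 3 2))"
  proof
    fix q :: q4 obtain a b c d where q: "q = (a,b,c,d)" by (cases q) auto
    show "qmon [0,0,1,1] q = (1/4) * (Rent q 2 3 + Rent q 3 2)" unfolding q by (simp add: qmon_def Nq_def field_simps power2_eq_square)
  qed
  also have "... \<in> VQ.span (insert (\<lambda>q. Nq q ^ 1) (Ed 1))"
    by (intro sp_scale sp_add sp_diff U1_N U1_Rent)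
  finally show ?thesis .
qed

lemma Exs2: "e \<in> Exs 2 \<Longrightarrow> e \<in> {[2,0,0,0],[0,2,0,0],[0,0,2,0],[0,0,0,2],[1,1,0,0],[1,0,1,0],[1,0,0,1],[0,1,1,0],[0,1,0,1],[0,0,1,1]}"
proof (elim Ex_elim)
  fix x0 x1 x2 x3 :: nat assume e: "e = [x0,x1,x2,x3]" and s: "x0 + x1 + x2 + x3 = 2"
  have "(x0 = 2 \<and> x1 = 0 \<and> x2 = 0 \<and> x3 = 0) \<or> (x0 = 0 \<and> x1 = 2 \<and> x2 = 0 \<and> x3 = 0) \<or>
        (x0 = 0 \<and> x1 = 0 \<and> x2 = 2 \<and> x3 = 0) \<or> (x0 = 0 \<and> x1 = 0 \<and> x2 = 0 \<and> x3 = 2) \<or>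
        (x0 = 1 \<and> x1 = 1 \<and> x2 = 0 \<and> x3 = 0) \<or> (x0 = 1 \<and> x1 = 0 \<and> x2 = 1 \<and> x3 = 0) \<or>
        (x0 = 1 \<and> x1 = 0 \<and> x2 = 0 \<and> x3 = 1) \<or> (x0 = 0 \<and> x1 = 1 \<and> x2 = 1 \<and> x3 = 0) \<or>
        (x0 = 0 \<and> x1 = 1 \<and> x2 = 0 \<and> x3 = 1) \<or> (x0 = 0 \<and> x1 = 0 \<and> x2 = 1 \<and> x3 = 1)"
    using s by presburger
  then show ?thesis unfolding e by (elim disjE) simp_all
qed

lemma Qm2_U1: "Qm 2 \<subseteq> VQ.span (insert (\<lambda>q. Nq q ^ 1) (Ed 1))"
proof
  fix f assume "f \<in> Qm 2"
  then obtain e where e: "e \<in> Exs 2" "f = qmon e" unfolding Qm_def by blast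
  show "f \<in> VQ.span (insert (\<lambda>q. Nq q ^ 1) (Ed 1))"
    using Exs2[OF e(1)] unfolding e(2) insert_iff empty_iff
    by (elim disjE) (simp_all only: Q2_2000 Q2_0200 Q2_0020 Q2_0002 Q2_1100 Q2_1010 Q2_1001 Q2_0110 Q2_0101 Q2_0011)
qed

lemma NN_PP2: "(\<lambda>q. Nq q ^ 2) \<in> VQ.span (Ed 2)"
proof -
  have "(\<lambda>q. Nq q ^ 2) = (\<lambda>q. Rent q 1 1 * Rent q 1 1 + Rent q 2 1 * Rent q 2 1 + Rent q 3 1 * Rent q 3 1)"
  proof
    fix q show "Nq q ^ 2 = Rent q 1 1 * Rent q 1 1 + Rent q 2 1 * Rent q 2 1 + Rent q 3 1 * Rent q 3 1"
      using RtR[of q 1 1] by (simp add: sum_3)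
  qed
  also have "... \<in> VQ.span (Ed 2)" by (intro sp_add PP_mult11 Rent_PP1)
  finally show ?thesis .
qed

lemma NR: "(\<lambda>q. Nq q * Rent q i j) \<in> VQ.span (Ed 2)"
  using exhaust_3[of i] exhaust_3[of j]
  by (elim disjE) (simp_all add: NR_11 NR_12 NR_13 NR_21 NR_22 NR_23 NR_31 NR_32 NR_33)

lemma td_split:
  assumes "total_degree a = Suc k"
  shows "\<exists>i j a'. a = (\<lambda>i' j'. dlt i j i' j' + a' i' j') \<and> total_degree a' = k"
proof -
  obtain i j where ij: "a i j \<noteq> 0"
  proof -
    have "\<exists>i j. a i j \<noteq> 0"
    proof (rule ccontr)
      assume "\<not> ?thesis"
      then have "total_degree a = 0" by (simp add: total_degree_def)
      then show False using assms by simp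
    qed
    then show ?thesis using that by blast
  qed
  define a' where "a' = (\<lambda>i' j'. a i' j' - dlt i j i' j')"
  have eq: "a = (\<lambda>i' j'. dlt i j i' j' + a' i' j')"
    using ij by (auto simp: a'_def dlt_def fun_eq_iff)
  have "total_degree a = total_degree (dlt i j) + total_degree a'"
    by (subst eq) (rule td_add)
  then have "total_degree a' = k" using assms td_dlt by simp
  then show ?thesis using eq by blast
qed

lemma NP:
  assumes "f \<in> VQ.span (Ed (Suc k))"
  shows "(\<lambda>q. Nq q * f q) \<in> VQ.span (Ed (Suc k + 1))"
proof (rule span_mult1[OF _ assms])
  fix g assume "g \<in> Ed (Suc k)"
  then obtain a where a: "total_degree a = Suc k" "g = (\<lambda>q. monomial_eval a (Rm q))" unfolding Ed_def by blast
  obtain i j a' where a': "a = (\<lambda>i' j'. dlt i j i' j' + a' i' j')" "total_degree a' = k"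
    using td_split[OF a(1)] by blast
  have "g = (\<lambda>q. Rent q i j * monomial_eval a' (Rm q))"
    unfolding a(2) a'(1) mono_mult[symmetric] mono_dlt by simp
  then have "(\<lambda>q. Nq q * g q) = (\<lambda>q. (Nq q * Rent q i j) * monomial_eval a' (Rm q))"
    by (simp add: mult.assoc)
  also have "... \<in> VQ.span (Ed (2 + k))"
    using a'(2) by (intro PP_mult NR VQ.span_base) (auto simp: Ed_def)
  finally show "(\<lambda>q. Nq q * g q) \<in> VQ.span (Ed (Suc k + 1))" by simp
qed

lemma NpowP: "f \<in> VQ.span (Ed (Suc k)) \<Longrightarrow> (\<lambda>q. Nq q ^ n * f q) \<in> VQ.span (Ed (Suc k + n))"
proof (induction n)
  case 0 then show ?case by simp
next
  case (Suc n)
  then have "(\<lambda>q. Nq q ^ n * f q) \<in> VQ.span (Ed (Suc (k + n)))" by simp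
  then have "(\<lambda>q. Nq q * (Nq q ^ n * f q)) \<in> VQ.span (Ed (Suc (k + n) + 1))" by (rule NP)
  then show ?case by (simp add: mult.assoc)
qed

lemma Npow_PP: "(\<lambda>q. Nq q ^ (Suc (Suc n))) \<in> VQ.span (Ed (Suc (Suc n)))"
proof (induction n)
  case 0 then show ?case using NN_PP2 by (simp add: numeral_2_eq_2)
next
  case (Suc n)
  then have "(\<lambda>q. Nq q * Nq q ^ (Suc (Suc n))) \<in> VQ.span (Ed (Suc (Suc n) + 1))" by (rule NP)
  moreover have "(\<lambda>q. Nq q ^ Suc (Suc (Suc n))) = (\<lambda>q. Nq q * Nq q ^ (Suc (Suc n)))" by simp
  ultimately show ?case by (metis Suc_eq_plus1)
qed

definition U :: "nat \<Rightarrow> (q4 \<Rightarrow> complex) set" where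
  "U k = VQ.span (insert (\<lambda>q. Nq q ^ k) (Ed k))"

lemma PP_U: "VQ.span (Ed k) \<subseteq> U k"
  unfolding U_def by (rule VQ.span_mono) auto

lemma U_mult:
  assumes "f \<in> U (Suc m)" "g \<in> U (Suc n)"
  shows "(\<lambda>q. f q * g q) \<in> U (Suc m + Suc n)"
  using assms unfolding U_def
proof (rule span_mult[rotated])
  fix f0 g0 assume f0: "f0 \<in> insert (\<lambda>q. Nq q ^ Suc m) (Ed (Suc m))"
    and g0: "g0 \<in> insert (\<lambda>q. Nq q ^ Suc n) (Ed (Suc n))"
  show "(\<lambda>q. f0 q * g0 q) \<in> VQ.span (insert (\<lambda>q. Nq q ^ (Suc m + Suc n)) (Ed (Suc m + Suc n)))"
  proof (cases "f0 = (\<lambda>q. Nq q ^ Suc m)")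
    case f: True
    show ?thesis
    proof (cases "g0 = (\<lambda>q. Nq q ^ Suc n)")
      case True
      have eq: "(\<lambda>q. f0 q * g0 q) = (\<lambda>q. Nq q ^ (Suc m + Suc n))" unfolding f True by (simp only: power_add)
      have "(\<lambda>q. Nq q ^ (Suc m + Suc n)) \<in> VQ.span (insert (\<lambda>q. Nq q ^ (Suc m + Suc n)) (Ed (Suc m + Suc n)))"
        by (rule VQ.span_base) (rule insertI1)
      then show ?thesis unfolding eq .
    next
      case False
      then have g0': "g0 \<in> VQ.span (Ed (Suc n))" using g0 by (auto intro: VQ.span_base)
      have "(\<lambda>q. Nq q ^ Suc m * g0 q) \<in> VQ.span (Ed (Suc n + Suc m))" by (rule NpowP[OF g0'])
      then have "(\<lambda>q. f0 q * g0 q) \<in> VQ.span (Ed (Suc m + Suc n))" unfolding f by (simp only: add.commute)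
      then show ?thesis using PP_U unfolding U_def by blast
    qed
  next
    case False
    then have f0': "f0 \<in> VQ.span (Ed (Suc m))" using f0 by (auto intro: VQ.span_base)
    show ?thesis
    proof (cases "g0 = (\<lambda>q. Nq q ^ Suc n)")
      case True
      have "(\<lambda>q. Nq q ^ Suc n * f0 q) \<in> VQ.span (Ed (Suc m + Suc n))" by (rule NpowP[OF f0'])
      then have "(\<lambda>q. f0 q * g0 q) \<in> VQ.span (Ed (Suc m + Suc n))" unfolding True by (simp only: mult.commute)
      then show ?thesis using PP_U unfolding U_def by blast
    next
      case False
      then have "g0 \<in> VQ.span (Ed (Suc n))" using g0 by (auto intro: VQ.span_base)
      from PP_mult[OF f0' this] show ?thesis using PP_U unfolding U_def by blast
    qed
  qed
qed

lemma Exs_split1: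
  assumes "e \<in> Exs (Suc k)"
  shows "\<exists>u e'. u \<in> Exs 1 \<and> e' \<in> Exs k \<and> e = ladd u e'"
  using assms
proof (elim Ex_elim)
  fix x0 x1 x2 x3 assume e: "e = [x0,x1,x2,x3]" and s: "x0 + x1 + x2 + x3 = Suc k"
  have "x0 > 0 \<or> x1 > 0 \<or> x2 > 0 \<or> x3 > 0" using s by auto
  then show ?thesis
  proof (elim disjE)
    assume "x0 > 0" then show ?thesis using s unfolding e
      by (intro exI[of _ "[1,0,0,0]"] exI[of _ "[x0-1,x1,x2,x3]"]) (simp add: Exs_def ladd_def)
  next
    assume "x1 > 0" then show ?thesis using s unfolding e
      by (intro exI[of _ "[0,1,0,0]"] exI[of _ "[x0,x1-1,x2,x3]"]) (simp add: Exs_def ladd_def)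
  next
    assume "x2 > 0" then show ?thesis using s unfolding e
      by (intro exI[of _ "[0,0,1,0]"] exI[of _ "[x0,x1,x2-1,x3]"]) (simp add: Exs_def ladd_def)
  next
    assume "x3 > 0" then show ?thesis using s unfolding e
      by (intro exI[of _ "[0,0,0,1]"] exI[of _ "[x0,x1,x2,x3-1]"]) (simp add: Exs_def ladd_def)
  qed
qed

lemma Qm_U: "Qm (2 * Suc d) \<subseteq> U (Suc d)"
proof (induction d)
  case 0 then show ?case using Qm2_U1 unfolding U_def by simp
next
  case (Suc d)
  show ?case
  proof
    fix f assume "f \<in> Qm (2 * Suc (Suc d))"
    then obtain e where e: "e \<in> Exs (Suc (Suc (2 * Suc d)))" "f = qmon e" unfolding Qm_def by auto
    obtain u1 e1 where u1: "u1 \<in> Exs 1" "e1 \<in> Exs (Suc (2 * Suc d))" "e = ladd u1 e1"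
      using Exs_split1[OF e(1)] by blast
    obtain u2 e2 where u2: "u2 \<in> Exs 1" "e2 \<in> Exs (2 * Suc d)" "e1 = ladd u2 e2"
      using Exs_split1[OF u1(2)] by blast
    have f: "f = (\<lambda>q. qmon (ladd u1 u2) q * qmon e2 q)"
      unfolding e(2) u1(3) u2(3) by (simp add: fun_eq_iff qmon_ladd mult.assoc)
    have "qmon (ladd u1 u2) \<in> Qm 2"
      using ladd_Exs[OF u1(1) u2(1)] unfolding Qm_def one_add_one by blast
    then have "qmon (ladd u1 u2) \<in> U 1" using Qm2_U1 unfolding U_def by blast
    then have "qmon (ladd u1 u2) \<in> U (Suc 0)" by (simp only: One_nat_def)
    moreover have "qmon e2 \<in> U (Suc d)" using Suc u2(2) unfolding Qm_def by auto
    ultimately have "f \<in> U (Suc 0 + Suc d)" unfolding f by (rule U_mult)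
    then show "f \<in> U (Suc (Suc d))" by simp
  qed
qed

lemma U_PP: "U (Suc (Suc n)) \<subseteq> VQ.span (Ed (Suc (Suc n)))"
proof -
  have "insert (\<lambda>q. Nq q ^ Suc (Suc n)) (Ed (Suc (Suc n))) \<subseteq> VQ.span (Ed (Suc (Suc n)))"
    using Npow_PP[of n] VQ.span_superset by blast
  then show ?thesis unfolding U_def by (rule VQ.span_minimal) simp
qed

lemma Exs0: "e \<in> Exs 0 \<Longrightarrow> e = [0,0,0,0]"
  by (elim Ex_elim) simp

lemma Qm_PP: assumes "d \<noteq> 1" shows "Qm (2*d) \<subseteq> VQ.span (Ed d)"
proof (cases d)
  case 0
  have "(\<lambda>q. monomial_eval (\<lambda>i j. 0) (Rm q)) \<in> Ed 0" unfolding Ed_def by (auto simp: total_degree_def)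
  moreover have "(\<lambda>q. monomial_eval (\<lambda>i j. 0) (Rm q)) = qmon [0,0,0,0]"
    by (auto simp: fun_eq_iff monomial_eval_def qmon_def)
  ultimately show ?thesis using 0 Exs0 unfolding Qm_def by (auto intro: VQ.span_base)
next
  case (Suc m)
  then obtain n where n: "d = Suc (Suc n)" using assms by (cases m) auto
  show ?thesis unfolding n using Qm_U[of "Suc n"] U_PP[of n] by blast
qed

lemma dim_Ed_ne1: assumes "d \<noteq> 1" shows "VQ.dim (Ed d) = (2*d+3) choose 3"
proof -
  have "VQ.span (Ed d) = VQ.span (Qm (2*d))"
    unfolding VQ.span_eq using Ed_Qm Qm_PP[OF assms] by blast
  then have "VQ.dim (Ed d) = VQ.dim (Qm (2*d))" by (rule VQ.span_eq_dim)
  then show ?thesis by (simp add: dim_Qm)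
qed

lemma td1: assumes "total_degree a = 1" shows "\<exists>i j. a = dlt i j"
proof -
  obtain i j a' where a: "a = (\<lambda>i' j'. dlt i j i' j' + a' i' j')" "total_degree a' = 0"
    using td_split[of a 0] assms by auto
  have "a' i' j' = 0" for i' j' using a(2) by (simp add: total_degree_def)
  then have "a = dlt i j" using a(1) by (simp add: fun_eq_iff)
  then show ?thesis by blast
qed

lemma Ed1_sub: "Ed 1 \<subseteq> (\<lambda>(i,j) q. Rent q i j) ` UNIV"
proof
  fix f assume "f \<in> Ed 1"
  then obtain a where a: "total_degree a = 1" "f = (\<lambda>q. monomial_eval a (Rm q))" unfolding Ed_def by blast
  obtain i j where "a = dlt i j" using td1[OF a(1)] by blast
  then have "f = (\<lambda>(i,j) q. Rent q i j) (i,j)" using a(2) by (simp add: mono_dlt)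
  then show "f \<in> (\<lambda>(i,j) q. Rent q i j) ` UNIV" by blast
qed

lemma Ed1_fin: "finite (Ed 1)" and Ed1_card: "card (Ed 1) \<le> 9"
proof -
  have f: "finite ((\<lambda>(i,j) q. Rent q i j) ` (UNIV :: (3 \<times> 3) set))" by simp
  show "finite (Ed 1)" using finite_subset[OF Ed1_sub f] .
  have "card (Ed 1) \<le> card ((\<lambda>(i,j) q. Rent q i j) ` (UNIV :: (3 \<times> 3) set))"
    by (rule card_mono[OF f Ed1_sub])
  also have "... \<le> card (UNIV :: (3 \<times> 3) set)" by (rule card_image_le) simp
  also have "... = 9" using card_cartesian_product[of "UNIV::3 set" "UNIV::3 set"] by simp
  finally show "card (Ed 1) \<le> 9" .
qed

lemma dim_Ed1: "VQ.dim (Ed 1) = 9"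
proof -
  have le: "VQ.dim (Ed 1) \<le> 9"
    using VQ.dim_le_card[OF VQ.span_superset Ed1_fin] Ed1_card by linarith
  obtain B where B: "B \<subseteq> Ed 1" "VQ.independent B" "Ed 1 \<subseteq> VQ.span B" "card B = VQ.dim (Ed 1)"
    using VQ.basis_exists by blast
  have finB: "finite B" using finite_subset[OF B(1) Ed1_fin] .
  have "insert (\<lambda>q. Nq q ^ 1) (Ed 1) \<subseteq> VQ.span (insert (\<lambda>q. Nq q ^ 1) B)"
    using B(3) VQ.span_mono[of B "insert (\<lambda>q. Nq q ^ 1) B"] by (auto intro: VQ.span_base)
  then have "U 1 \<subseteq> VQ.span (insert (\<lambda>q. Nq q ^ 1) B)"
    unfolding U_def by (rule VQ.span_minimal) simp
  then have "Qm 2 \<subseteq> VQ.span (insert (\<lambda>q. Nq q ^ 1) B)" using Qm_U[of 0] by simp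
  then have "VQ.dim (Qm 2) \<le> card (insert (\<lambda>q. Nq q ^ 1) B)"
    using finB by (intro VQ.dim_le_card) auto
  also have "... \<le> Suc (card B)" using finB by (simp add: card_insert_if)
  finally have "10 \<le> Suc (card B)" by (simp add: dim_Qm numeral_eq_Suc)
  then show ?thesis using le B(4) by linarith
qed

lemma hilbert_function_formula: "hilbert_function d = (if d = 1 then 9 else (2*d+3) choose 3)"
  unfolding hf_Ed using dim_Ed1 dim_Ed_ne1 by simp

lemma choose3: "(of_nat (Suc (Suc (Suc j)) choose 3) :: rat) = of_nat ((j+1)*(j+2)*(j+3)) / 6"
proof -
  have "(of_nat (Suc (Suc (Suc j)) choose 3) :: rat) = fact (Suc (Suc (Suc j))) / (fact 3 * fact (Suc (Suc (Suc j)) - 3))"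
    by (rule binomial_fact) simp
  also have "... = of_nat ((j+1)*(j+2)*(j+3)) / 6"
    by (simp add: fact_numeral field_simps)
  finally show ?thesis .
qed

lemma one_minus_X4: "(1 - fps_X :: rat fps)^4 = 1 - 4*fps_X + 6*fps_X^2 - 4*fps_X^3 + fps_X^4"
  by algebra

definition gser :: "rat fps" where "gser = Abs_fps (\<lambda>d. of_nat ((2*d+3) choose 3))"

lemma gser_nth: "fps_nth gser n = of_nat ((2*n+1)*(2*n+2)*(2*n+3)) / 6"
  using choose3[of "2*n"] by (simp add: gser_def numeral_eq_Suc)

lemma gser_mult: "gser * (1 - fps_X)^4 = 1 + 6*fps_X + fps_X^2"
proof (rule fps_ext)
  fix n
  have P: "gser * (1 - fps_X)^4 = gser - fps_const 4 * (fps_X^1 * gser) + fps_const 6 * (fps_X^2 * gser)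
      - fps_const 4 * (fps_X^3 * gser) + fps_X^4 * gser"
    unfolding one_minus_X4 numeral_fps_const[symmetric] by algebra
  have e: "fps_nth (gser * (1 - fps_X)^4) n = fps_nth gser n - 4 * (if n < 1 then 0 else fps_nth gser (n-1))
      + 6 * (if n < 2 then 0 else fps_nth gser (n-2)) - 4 * (if n < 3 then 0 else fps_nth gser (n-3))
      + (if n < 4 then 0 else fps_nth gser (n-4))"
    unfolding P by (simp only: fps_add_nth fps_sub_nth fps_mult_left_const_nth fps_X_power_mult_nth)
  show "fps_nth (gser * (1 - fps_X)^4) n = fps_nth (1 + 6*fps_X + fps_X^2 :: rat fps) n"
  proof (cases "n < 4")
    case True
    then consider "n = 0" | "n = 1" | "n = 2" | "n = 3" by linarith
    then show ?thesis unfolding e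
      by cases (simp_all add: gser_nth numeral_fps_const)
  next
    case False
    then obtain m where m: "n = m + 4" by (metis add.commute le_Suc_ex not_less)
    have "fps_nth (gser * (1 - fps_X)^4) n = fps_nth gser (m+4) - 4 * fps_nth gser (m+3)
       + 6 * fps_nth gser (m+2) - 4 * fps_nth gser (m+1) + fps_nth gser m"
      unfolding e by (simp add: m add.commute)
    also have "... = 0"
      unfolding gser_nth by (simp add: field_simps algebra_simps)
    finally show ?thesis using m by (simp add: numeral_fps_const)
  qed
qed


theorem theorem3p2:
  shows "hilbert_series = - fps_X + Abs_fps (\<lambda>d. of_nat ((2*d+3) choose 3))
       \<and> hilbert_series = (1 + 5*fps_X + 5*fps_X^2 - 6*fps_X^3 + 4*fps_X^4 - fps_X^5) / (1 - fps_X)^4"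
proof -
  have h1: "hilbert_series = - fps_X + gser"
  proof (rule fps_ext)
    fix n
    show "fps_nth hilbert_series n = fps_nth (- fps_X + gser) n"
    proof (cases "n = 1")
      case True
      have "(5::nat) choose 3 = 10" by (simp add: numeral_eq_Suc)
      then show ?thesis using True by (simp add: hilbert_series_def gser_def hilbert_function_formula)
    next
      case False
      then show ?thesis by (simp add: hilbert_series_def gser_def hilbert_function_formula)
    qed
  qed
  define D :: "rat fps" where "D = (1 - fps_X)^4"
  have D0: "fps_nth D 0 \<noteq> 0" unfolding D_def fps_power_zeroth by simp
  have "hilbert_series * D = - fps_X * D + gser * D" unfolding h1 by (simp add: algebra_simps)
  also have "... = 1 + 5*fps_X + 5*fps_X^2 - 6*fps_X^3 + 4*fps_X^4 - fps_X^5"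
    unfolding D_def gser_mult by algebra
  finally have num: "1 + 5*fps_X + 5*fps_X^2 - 6*fps_X^3 + 4*fps_X^4 - fps_X^5 = hilbert_series * D" ..
  have "(1 + 5*fps_X + 5*fps_X^2 - 6*fps_X^3 + 4*fps_X^4 - fps_X^5) / D = hilbert_series * D * inverse D"
    unfolding num by (rule fps_divide_unit[OF D0])
  also have "... = hilbert_series" using inverse_mult_eq_1'[OF D0] by (simp add: mult.assoc)
  finally have h2: "hilbert_series = (1 + 5*fps_X + 5*fps_X^2 - 6*fps_X^3 + 4*fps_X^4 - fps_X^5) / D" ..
  show ?thesis using h1 h2 unfolding gser_def D_def by blast
qed

end
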